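(* Let $n\geq 3$ and let $|\cdot|$ be any homogeneous quasi-norm on $\mathbb{R}^n$ (with respect to the standard dilations $x\mapsto\lambda x$). Then for every $f\in C_0^\infty(\mathbb{R}^n\setminus\{0\})$ and every $\alpha\in\mathbb{R}$, $$\frac{|n-2-2\alpha|}{2}\left\|\frac{f}{|x|^{\alpha+1}}\right\|_{L^{2}(\mathbb{R}^{n})}\leq\left\|\frac{1}{|x|^{\alpha}}\frac{df}{d|x|}\right\|_{L^{2}(\mathbb{R}^{n})},$$ and for $\alpha\neq\frac{n-2}{2}$ the constant $\frac{|n-2-2\alpha|}{2}$ is optimal.
   Context: A homogeneous quasi-norm on $\mathbb{R}^n$ (with standard dilations) is a continuous function $x\mapsto|x|\in[0,\infty)$ with $|-x|=|x|$, $|\lambda x|=\lambda|x|$ for all $\lambda>0$, and $|x|=0$ iff $x=0$. For $x\neq0$, $\frac{df}{d|x|}(x)=\frac{d}{dr}\big[f(r y)\big]\big|_{r=|x|}$ where $y=x/|x|$ (scalar division), i.e. the derivative along the ray through $x$ with respect to the quasi-norm parameter $r=|x|$. $L^2$ norms are with respect to Lebesgue measure. *)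

theory Defs
  imports "HOL-Analysis.Analysis"
begin

definition homogeneous_quasi_norm :: "('a::euclidean_space \<Rightarrow> real) \<Rightarrow> bool" where
  "homogeneous_quasi_norm q \<longleftrightarrow>
     continuous_on UNIV q \<and>
     (\<forall>x. q x \<ge> 0) \<and>
     (\<forall>x. q (- x) = q x) \<and>
     (\<forall>x. \<forall>l>0. q (l *\<^sub>R x) = l * q x) \<and>
     (\<forall>x. q x = 0 \<longleftrightarrow> x = 0)"

coinductive smooth_fun :: "('a::real_normed_vector \<Rightarrow> real) \<Rightarrow> bool" where
  "(\<forall>x. f differentiable (at x)) \<Longrightarrow>
   (\<forall>v. smooth_fun (\<lambda>x. frechet_derivative f (at x) v)) \<Longrightarrow> smooth_fun f"

definition Cc_infty_punctured :: "('a::euclidean_space \<Rightarrow> real) set" where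
  "Cc_infty_punctured = {f. smooth_fun f \<and> compact (closure {x. f x \<noteq> 0})
                              \<and> 0 \<notin> closure {x. f x \<noteq> 0}}"

definition radial_deriv :: "('a::euclidean_space \<Rightarrow> real) \<Rightarrow> ('a \<Rightarrow> real) \<Rightarrow> 'a \<Rightarrow> real" where
  "radial_deriv q f x = deriv (\<lambda>r. f (r *\<^sub>R (x /\<^sub>R q x))) (q x)"

definition L2norm :: "('a::euclidean_space \<Rightarrow> real) \<Rightarrow> real" where
  "L2norm g = sqrt (integral\<^sup>L lborel (\<lambda>x. (g x)\<^sup>2))"

end

theory Submission
  imports Defs
begin

lemma lborel_scale:
  fixes g :: "'a::euclidean_space \<Rightarrow> real" and c :: real
  assumes c: "c > 0" and g: "integrable lborel g"
  shows "integrable lborel (\<lambda>x. g (c *\<^sub>R x))"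
    and "(\<integral>x. g (c *\<^sub>R x) \<partial>lborel) = (\<integral>x. g x \<partial>lborel) / c ^ DIM('a)"
proof -
  have L: "lborel = density (distr lborel borel (\<lambda>x::'a. 0 + c *\<^sub>R x)) (\<lambda>_. \<bar>c\<bar>^DIM('a))"
    using lborel_affine[of c "0::'a"] c by simp
  have gm[measurable]: "g \<in> borel_measurable borel" using g by auto
  have "integrable (density (distr lborel borel (\<lambda>x::'a. 0 + c *\<^sub>R x)) (\<lambda>_. \<bar>c\<bar>^DIM('a))) g"
    using g L by simp
  then have "integrable (distr lborel borel (\<lambda>x. c *\<^sub>R x)) (\<lambda>x. \<bar>c\<bar>^DIM('a) *\<^sub>R g x)"
    by (subst (asm) integrable_density) (auto)
  then have "integrable lborel (\<lambda>x. \<bar>c\<bar>^DIM('a) *\<^sub>R g (c *\<^sub>R x))"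
    by (subst (asm) integrable_distr_eq) auto
  then show I: "integrable lborel (\<lambda>x. g (c *\<^sub>R x))"
    using c by simp
  have "(\<integral>x. g x \<partial>lborel) = (\<integral>x. g x \<partial>(density (distr lborel borel (\<lambda>x::'a. 0 + c *\<^sub>R x)) (\<lambda>_. \<bar>c\<bar>^DIM('a))))"
    using L by simp
  also have "\<dots> = (\<integral>x. \<bar>c\<bar>^DIM('a) *\<^sub>R g x \<partial>(distr lborel borel (\<lambda>x. c *\<^sub>R x)))"
    by (subst integral_density) auto
  also have "\<dots> = (\<integral>x. \<bar>c\<bar>^DIM('a) *\<^sub>R g (c *\<^sub>R x) \<partial>lborel)"
    by (subst integral_distr) auto
  also have "\<dots> = c^DIM('a) * (\<integral>x. g (c *\<^sub>R x) \<partial>lborel)"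
    using c by simp
  finally show "(\<integral>x. g (c *\<^sub>R x) \<partial>lborel) = (\<integral>x. g x \<partial>lborel) / c ^ DIM('a)"
    using c by (simp add: field_simps)
qed

lemma cs_integrable:
  fixes h :: "'a::euclidean_space \<Rightarrow> real"
  assumes "continuous_on UNIV h" "\<And>x. norm x > R \<Longrightarrow> h x = 0"
  shows "integrable lborel h"
proof -
  have "integrable lborel (\<lambda>x. indicator (cball 0 R) x *\<^sub>R h x)"
    by (rule borel_integrable_compact) (auto intro: continuous_on_subset[OF assms(1)])
  also have "(\<lambda>x. indicator (cball 0 R) x *\<^sub>R h x) = h"
    using assms(2) by (auto simp: indicator_def fun_eq_iff not_le)
  finally show ?thesis .
qed

lemma cs_has_integral:
  fixes h :: "'a::euclidean_space \<Rightarrow> real"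
  assumes "continuous_on UNIV h" "\<And>x. norm x > R \<Longrightarrow> h x = 0"
  shows "(h has_integral (\<integral>x. h x \<partial>lborel)) UNIV"
  by (rule has_integral_integral_lborel[OF cs_integrable[OF assms]])

lemma euler_int:
  fixes H G :: "'a::euclidean_space \<Rightarrow> real"
  assumes contH: "continuous_on UNIV H" and contG: "continuous_on UNIV G"
    and suppH: "\<And>x. norm x > R \<Longrightarrow> H x = 0" and suppG: "\<And>x. norm x > R \<Longrightarrow> G x = 0"
    and der: "\<And>x. ((\<lambda>t. H (t *\<^sub>R x)) has_real_derivative G x) (at 1)"
  shows "(\<integral>x. G x \<partial>lborel) = - real DIM('a) * (\<integral>x. H x \<partial>lborel)"
proof -
  define R' where "R' = 2 * \<bar>R\<bar> + 1"
  have R'pos: "R' > 0" by (simp add: R'_def add_pos_nonneg)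
  define bx where "bx = cbox (- (R' *\<^sub>R (\<Sum>Basis::'a))) (R' *\<^sub>R (\<Sum>Basis::'a))"
  define U where "U = {1/2<..<(2::real)}"
  have openU: "open U" and convU: "convex U" and oneU: "1 \<in> U" by (auto simp: U_def)
  define IH where "IH = (\<integral>x. H x \<partial>lborel)"
  have outbx: "norm (t *\<^sub>R x) > R" if "t \<in> U" "x \<notin> bx" for t x
  proof -
    from that(2) obtain b where b: "b \<in> Basis" "\<bar>x \<bullet> b\<bar> > R'"
      by (auto simp: bx_def mem_box inner_sum_left inner_Basis sum.delta abs_le_iff not_le)
    have "norm x \<ge> \<bar>x \<bullet> b\<bar>" using b(1) by (rule Basis_le_norm)
    hence "norm x > R'" using b by simp
    moreover have "t > 1/2" using that(1) by (simp add: U_def)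
    ultimately have "(1/2) * R' < t * norm x"
      using R'pos by (intro mult_strict_mono) auto
    thus ?thesis using that(1) by (simp add: U_def R'_def)
  qed
  have Hs_int: "integrable lborel (\<lambda>x. H (t *\<^sub>R x))" and
    Hs_val: "(\<integral>x. H (t *\<^sub>R x) \<partial>lborel) = IH / t ^ DIM('a)" if "t > 0" for t
    using lborel_scale[OF that cs_integrable[OF contH suppH]] by (auto simp: IH_def)
  have F_eq: "integral bx (\<lambda>x. H (t *\<^sub>R x)) = IH / t ^ DIM('a)" if t: "t \<in> U" for t
  proof -
    have tpos: "t > 0" using t by (simp add: U_def)
    have "((\<lambda>x. H (t *\<^sub>R x)) has_integral IH / t ^ DIM('a)) UNIV"
      using has_integral_integral_lborel[OF Hs_int[OF tpos]] Hs_val[OF tpos] by simp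
    moreover have "(\<lambda>x. if x \<in> bx then H (t *\<^sub>R x) else 0) = (\<lambda>x. H (t *\<^sub>R x))"
    proof (rule ext)
      fix x show "(if x \<in> bx then H (t *\<^sub>R x) else 0) = H (t *\<^sub>R x)"
        using suppH[OF outbx[OF t, of x]] by simp
    qed
    ultimately have "((\<lambda>x. if x \<in> bx then H (t *\<^sub>R x) else 0) has_integral IH / t ^ DIM('a)) UNIV"
      by simp
    hence "((\<lambda>x. H (t *\<^sub>R x)) has_integral IH / t ^ DIM('a)) bx"
      by (simp only: has_integral_restrict_UNIV)
    thus ?thesis by (rule integral_unique)
  qed
  have derH: "((\<lambda>t. H (t *\<^sub>R x)) has_real_derivative G (t *\<^sub>R x) / t) (at t within U)"
    if "t \<in> U" for t x
  proof -
    have tpos: "t > 0" using that by (simp add: U_def)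
    have "((\<lambda>s. H (s *\<^sub>R (t *\<^sub>R x))) \<circ> (\<lambda>s. s / t) has_real_derivative G (t *\<^sub>R x) * (1/t)) (at t)"
      by (rule DERIV_chain) (use der[of "t *\<^sub>R x"] tpos in \<open>auto intro!: derivative_eq_intros\<close>)
    moreover have "((\<lambda>s. H (s *\<^sub>R (t *\<^sub>R x))) \<circ> (\<lambda>s. s / t)) = (\<lambda>s. H (s *\<^sub>R x))"
      using tpos by (auto simp: fun_eq_iff)
    ultimately show ?thesis by (auto intro: has_field_derivative_at_within)
  qed
  have cont2: "continuous_on (U \<times> bx) (\<lambda>(t, x). G (t *\<^sub>R x) / t)"
    by (auto simp: case_prod_unfold U_def intro!: continuous_intros continuous_on_compose2[OF contG])
  have L: "((\<lambda>t. integral bx (\<lambda>x. H (t *\<^sub>R x))) has_real_derivative integral bx (\<lambda>x. G (1 *\<^sub>R x) / 1)) (at 1 within U)"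
    unfolding bx_def
  proof (rule leibniz_rule_field_derivative[where f="\<lambda>t x. H (t *\<^sub>R x)" and fx="\<lambda>t x. G (t *\<^sub>R x) / t"])
    show "continuous_on (U \<times> cbox (- (R' *\<^sub>R \<Sum> Basis)) (R' *\<^sub>R \<Sum> Basis)) (\<lambda>(x, t). G (x *\<^sub>R t) / x)"
      using cont2 by (simp add: bx_def)
  qed (auto intro!: derH oneU convU integrable_continuous continuous_on_compose2[OF contH] continuous_intros)
  hence L1: "((\<lambda>t. integral bx (\<lambda>x. H (t *\<^sub>R x))) has_real_derivative integral bx G) (at 1)"
    using at_within_open[OF oneU openU] by simp
  have L2: "((\<lambda>t. IH / t ^ DIM('a)) has_real_derivative - real DIM('a) * IH) (at 1)"
    by (auto intro!: derivative_eq_intros)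
  have L3: "((\<lambda>t. integral bx (\<lambda>x. H (t *\<^sub>R x))) has_real_derivative - real DIM('a) * IH) (at 1)"
    by (rule has_field_derivative_transform_within_open[OF L2 openU oneU]) (use F_eq in auto)
  have "integral bx G = - real DIM('a) * IH" using DERIV_unique[OF L1 L3] .
  moreover have "integral bx G = (\<integral>x. G x \<partial>lborel)"
  proof -
    have "(G has_integral (\<integral>x. G x \<partial>lborel)) UNIV" by (rule cs_has_integral[OF contG suppG])
    moreover have "(\<lambda>x. if x \<in> bx then G x else 0) = G"
    proof (rule ext)
      fix x show "(if x \<in> bx then G x else 0) = G x"
        using suppG[OF outbx[OF oneU, of x]] by simp
    qed
    ultimately have "((\<lambda>x. if x \<in> bx then G x else 0) has_integral (\<integral>x. G x \<partial>lborel)) UNIV"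
      by simp
    hence "(G has_integral (\<integral>x. G x \<partial>lborel)) bx"
      by (simp only: has_integral_restrict_UNIV)
    thus ?thesis by (rule integral_unique)
  qed
  ultimately show ?thesis by (simp add: IH_def)
qed

lemma smooth_fun_D:
  assumes "smooth_fun f"
  shows "\<And>x. f differentiable (at x)" "\<And>v. smooth_fun (\<lambda>x. frechet_derivative f (at x) v)"
  using assms by (auto elim: smooth_fun.cases)

lemma smooth_fun_cont:
  assumes "smooth_fun f" shows "continuous_on UNIV f"
  using smooth_fun_D(1)[OF assms]
  by (intro differentiable_imp_continuous_on) (auto simp: differentiable_on_def intro: differentiable_at_withinI)

lemma ray_deriv:
  assumes "\<And>x. f differentiable (at x)"
  shows "((\<lambda>t. f (t *\<^sub>R y)) has_real_derivative frechet_derivative f (at (t *\<^sub>R y)) y) (at t)"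
proof -
  have d: "(f has_derivative frechet_derivative f (at (t *\<^sub>R y))) (at (t *\<^sub>R y))"
    using assms frechet_derivative_works by blast
  have lin: "linear (frechet_derivative f (at (t *\<^sub>R y)))"
    using assms linear_frechet_derivative by blast
  have "((\<lambda>s. f (s *\<^sub>R y)) has_derivative (\<lambda>s. frechet_derivative f (at (t *\<^sub>R y)) (s *\<^sub>R y))) (at t)"
  proof -
    have c: "((\<lambda>s. s *\<^sub>R y) has_derivative (\<lambda>s. s *\<^sub>R y)) (at t)"
      by (auto intro!: derivative_eq_intros)
    show ?thesis by (rule has_derivative_compose[OF c d])
  qed
  moreover have "(\<lambda>s. frechet_derivative f (at (t *\<^sub>R y)) (s *\<^sub>R y)) = (\<lambda>s. s * frechet_derivative f (at (t *\<^sub>R y)) y)"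
    using lin by (simp add: linear_scale fun_eq_iff)
  ultimately have "((\<lambda>s. f (s *\<^sub>R y)) has_derivative (\<lambda>s. s * frechet_derivative f (at (t *\<^sub>R y)) y)) (at t)"
    by simp
  moreover have "(\<lambda>s. s * frechet_derivative f (at (t *\<^sub>R y)) y) = (*) (frechet_derivative f (at (t *\<^sub>R y)) y)"
    by (auto simp: fun_eq_iff)
  ultimately show ?thesis by (simp add: has_field_derivative_def)
qed

lemma cont_away:
  fixes \<phi> :: "'a::real_normed_vector \<Rightarrow> real"
  assumes "\<And>x. x \<noteq> 0 \<Longrightarrow> isCont \<phi> x" "r > 0" "\<And>x. norm x < r \<Longrightarrow> \<phi> x = 0"
  shows "continuous_on UNIV \<phi>"
proof -
  have "isCont \<phi> 0"
    unfolding isCont_def using assms(2,3) assms(3)[of 0]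
    by (intro tendsto_eventually) (auto simp: eventually_at dist_norm intro!: exI[of _ r])
  then show ?thesis using assms(1) by (metis continuous_at_imp_continuous_on)
qed

lemma cauchy_schwarz_w:
  fixes a b w :: "'a::euclidean_space \<Rightarrow> real"
  assumes "integrable lborel (\<lambda>x. a x ^ 2 * w x)" "integrable lborel (\<lambda>x. b x ^ 2 * w x)"
    "integrable lborel (\<lambda>x. a x * b x * w x)" "\<And>x. w x \<ge> 0"
  shows "(\<integral>x. a x * b x * w x \<partial>lborel)^2 \<le> (\<integral>x. a x ^ 2 * w x \<partial>lborel) * (\<integral>x. b x ^ 2 * w x \<partial>lborel)"
proof -
  define A where "A = (\<integral>x. a x ^ 2 * w x \<partial>lborel)"
  define B where "B = (\<integral>x. b x ^ 2 * w x \<partial>lborel)"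
  define M where "M = (\<integral>x. a x * b x * w x \<partial>lborel)"
  have key: "0 \<le> t^2 * A - 2 * t * M + B" for t
  proof -
    have "0 \<le> (\<integral>x. (t * a x - b x)^2 * w x \<partial>lborel)"
      using assms(4) by (intro integral_nonneg_AE) auto
    also have "(\<lambda>x. (t * a x - b x)^2 * w x) = (\<lambda>x. t^2 * (a x ^ 2 * w x) - (2 * t) * (a x * b x * w x) + b x ^ 2 * w x)"
      by (auto simp: fun_eq_iff power2_eq_square algebra_simps)
    also have "(\<integral>x. t^2 * (a x ^ 2 * w x) - (2 * t) * (a x * b x * w x) + b x ^ 2 * w x \<partial>lborel) = t^2 * A - 2 * t * M + B"
      using assms(1-3) by (simp add: A_def B_def M_def)
    finally show ?thesis .
  qed
  have A0: "A \<ge> 0" unfolding A_def using assms(4) by (intro integral_nonneg_AE) auto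
  show ?thesis
  proof (cases "A = 0")
    case True
    have "M = 0"
    proof (rule ccontr)
      assume "M \<noteq> 0"
      have "0 \<le> ((B + 1) / (2*M))^2 * A - 2 * ((B + 1) / (2*M)) * M + B" by (rule key)
      moreover have "2 * ((B + 1) / (2 * M)) * M = B + 1" using \<open>M \<noteq> 0\<close> by (simp add: field_simps)
      ultimately show False using True by simp
    qed
    then show ?thesis using True by (simp add: A_def B_def M_def)
  next
    case False
    hence Apos: "A > 0" using A0 by simp
    have "0 \<le> (M/A)^2 * A - 2 * (M/A) * M + B" by (rule key)
    also have "\<dots> = B - M^2 / A" using Apos by (simp add: field_simps power2_eq_square)
    finally have "M^2 \<le> A * B" using Apos by (simp add: field_simps)
    then show ?thesis by (simp add: A_def B_def M_def)
  qed
qed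

lemma hqn_props:
  assumes "homogeneous_quasi_norm q"
  shows "continuous_on UNIV q" "\<And>x. q x \<ge> 0" "\<And>x l. l > 0 \<Longrightarrow> q (l *\<^sub>R x) = l * q x"
    "\<And>x. q x = 0 \<longleftrightarrow> x = 0"
  using assms unfolding homogeneous_quasi_norm_def by auto

lemma part1:
  fixes q f :: "'a::euclidean_space \<Rightarrow> real" and \<alpha> :: real
  assumes hq: "homogeneous_quasi_norm q" and fC: "f \<in> Cc_infty_punctured"
  shows "\<bar>real DIM('a) - 2 - 2 * \<alpha>\<bar> / 2 * L2norm (\<lambda>x. f x / q x powr (\<alpha> + 1))
           \<le> L2norm (\<lambda>x. radial_deriv q f x / q x powr \<alpha>)"
proof -
  note qc = hqn_props[OF hq]
  define S where "S = closure {x. f x \<noteq> 0}"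
  have sm: "smooth_fun f" and cS: "compact S" and S0: "0 \<notin> S"
    using fC by (auto simp: Cc_infty_punctured_def S_def)
  have dif: "\<And>x. f differentiable (at x)" by (rule smooth_fun_D(1)[OF sm])
  have contf: "continuous_on UNIV f" by (rule smooth_fun_cont[OF sm])
  have f0: "f x = 0" if "x \<notin> S" for x
    using that closure_subset[of "{x. f x \<noteq> 0}"] unfolding S_def by auto
  have clS: "closed S" using cS compact_imp_closed by blast
  obtain r where r: "r > 0" "\<And>x. norm x < r \<Longrightarrow> x \<notin> S"
  proof -
    have "open (- S)" "0 \<in> - S" using clS S0 by auto
    then obtain e where "e > 0" "ball 0 e \<subseteq> - S" using open_contains_ball by blast
    thus ?thesis using that by (auto simp: subset_iff)
  qed
  obtain R where R: "\<And>x. x \<in> S \<Longrightarrow> norm x \<le> R"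
    using compact_imp_bounded[OF cS] by (auto simp: bounded_iff)
  define Df where "Df x v = frechet_derivative f (at x) v" for x v
  define D where "D x = Df x x" for x
  have lin: "linear (Df x)" for x
    unfolding Df_def[abs_def] by (rule linear_frechet_derivative[OF dif])
  have Dzero: "D x = 0" if "x \<notin> S" for x
  proof -
    have "((\<lambda>_. 0::real) has_derivative (\<lambda>_. 0)) (at x)" by simp
    hence "(f has_derivative (\<lambda>_. 0)) (at x)"
      by (rule has_derivative_transform_within_open[where s="- S"]) (use clS that f0 in auto)
    hence "(\<lambda>_. 0) = Df x" unfolding Df_def by (metis frechet_derivative_at)
    thus ?thesis unfolding D_def by (metis)
  qed
  have Dsum: "D x = (\<Sum>b\<in>Basis. (x \<bullet> b) * Df x b)" for x
  proof -
    have "D x = Df x (\<Sum>b\<in>Basis. (x \<bullet> b) *\<^sub>R b)" by (simp add: D_def euclidean_representation)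
    also have "\<dots> = (\<Sum>b\<in>Basis. (x \<bullet> b) * Df x b)"
      by (simp add: linear_sum[OF lin] linear_scale[OF lin])
    finally show ?thesis .
  qed
  have contD: "continuous_on UNIV D"
  proof -
    have "continuous_on UNIV (\<lambda>x. \<Sum>b\<in>Basis. (x \<bullet> b) * Df x b)"
      unfolding Df_def
      by (intro continuous_on_sum continuous_on_mult continuous_intros smooth_fun_cont smooth_fun_D(2)[OF sm])
    moreover have "D = (\<lambda>x. \<Sum>b\<in>Basis. (x \<bullet> b) * Df x b)" by (rule ext, rule Dsum)
    ultimately show ?thesis by simp
  qed
  have ray1: "((\<lambda>t. f (t *\<^sub>R x)) has_real_derivative D x) (at 1)" for x
    using ray_deriv[OF dif, of x 1] by (simp add: D_def Df_def)
  have radial: "radial_deriv q f x = D x / q x" for x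
  proof (cases "x = 0")
    case True
    have "q 0 = 0" using qc(4) by simp
    moreover have "D 0 = 0" unfolding D_def using linear_0[OF lin] by simp
    ultimately show ?thesis using True by (simp add: radial_deriv_def)
  next
    case False
    hence qx: "q x > 0" using qc(2,4) by (metis less_eq_real_def)
    define y where "y = x /\<^sub>R q x"
    have xy: "q x *\<^sub>R y = x" using qx by (simp add: y_def)
    have "((\<lambda>t. f (t *\<^sub>R y)) has_real_derivative Df (q x *\<^sub>R y) y) (at (q x))"
      using ray_deriv[OF dif, of y "q x"] by (simp add: Df_def)
    hence "deriv (\<lambda>t. f (t *\<^sub>R y)) (q x) = Df (q x *\<^sub>R y) y" by (rule DERIV_imp_deriv)
    hence "radial_deriv q f x = Df x y"
      unfolding radial_deriv_def y_def[symmetric] by (simp only: xy)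
    also have "\<dots> = D x / q x" unfolding y_def D_def using linear_scale[OF lin]
      by (simp add: divide_inverse_commute scaleR_conv_of_real)
    finally show ?thesis .
  qed
  define p where "p = - (2 * \<alpha> + 2)"
  define W where "W x = q x powr p" for x
  have Wnn: "W x \<ge> 0" for x by (simp add: W_def)
  have Wcont: "isCont W x" if "x \<noteq> 0" for x
  proof -
    have "q x > 0" using qc(2,4) that by (metis less_eq_real_def)
    moreover have "isCont q x" using qc(1) by (simp add: continuous_on_eq_continuous_at)
    ultimately show ?thesis unfolding W_def by (intro continuous_intros) auto
  qed
  have intW: "integrable lborel (\<lambda>x. \<phi> x * W x)" and contW: "continuous_on UNIV (\<lambda>x. \<phi> x * W x)"
    if "continuous_on UNIV \<phi>" "\<And>x. x \<notin> S \<Longrightarrow> \<phi> x = 0" for \<phi>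
  proof -
    show c: "continuous_on UNIV (\<lambda>x. \<phi> x * W x)"
    proof (rule cont_away[OF _ r(1)])
      fix x :: 'a assume "x \<noteq> 0"
      thus "isCont (\<lambda>x. \<phi> x * W x) x"
        using that(1) Wcont by (intro continuous_intros) (auto simp: continuous_on_eq_continuous_at)
    qed (use that(2) r(2) in auto)
    show "integrable lborel (\<lambda>x. \<phi> x * W x)"
      by (rule cs_integrable[OF c, of R]) (use that(2) R in force)
  qed
  define H where "H x = (f x)^2 * W x" for x
  define G where "G x = (2 * f x * D x + p * (f x)^2) * W x" for x
  have cfD: "continuous_on UNIV (\<lambda>x. 2 * f x * D x + p * (f x)^2)"
    using contf contD by (intro continuous_intros)
  have c2: "continuous_on UNIV (\<lambda>x. (f x)^2)" using contf by (intro continuous_intros)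
  have c3: "continuous_on UNIV (\<lambda>x. (D x)^2)" using contD by (intro continuous_intros)
  have c4: "continuous_on UNIV (\<lambda>x. f x * D x)" using contf contD by (intro continuous_intros)
  have Hc: "continuous_on UNIV H" "integrable lborel H"
    unfolding H_def using contW[OF c2] intW[OF c2] f0 by auto
  have Gc: "continuous_on UNIV G" "integrable lborel G"
    unfolding G_def using contW[OF cfD] intW[OF cfD] f0 Dzero by auto
  have derHG: "((\<lambda>t. H (t *\<^sub>R x)) has_real_derivative G x) (at 1)" for x
  proof (cases "x = 0")
    case True
    have "f 0 = 0" using f0 S0 by simp
    thus ?thesis using True by (simp add: H_def G_def)
  next
    case False
    have Wh: "W (t *\<^sub>R x) = t powr p * W x" if "t > 0" for t
      using that qc(2,3) by (simp add: W_def powr_mult)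
    have "((\<lambda>t. (f (t *\<^sub>R x))^2 * (t powr p * W x)) has_real_derivative
            (2 * f (1 *\<^sub>R x) * D x) * (1 powr p * W x) + (f (1 *\<^sub>R x))^2 * ((p * 1 powr (p - 1)) * W x)) (at 1)"
      by (intro derivative_eq_intros ray1 has_real_derivative_powr) (auto simp: ray1)
    hence d: "((\<lambda>t. (f (t *\<^sub>R x))^2 * (t powr p * W x)) has_real_derivative G x) (at 1)"
      by (simp add: G_def algebra_simps)
    show ?thesis
      by (rule has_field_derivative_transform_within_open[OF d, of "{0<..}"]) (auto simp: H_def Wh)
  qed
  have Hsupp: "H x = 0" "G x = 0" if "norm x > R" for x
  proof -
    have "x \<notin> S" using that R[of x] by force
    thus "H x = 0" "G x = 0" using f0[of x] Dzero[of x] by (auto simp: H_def G_def)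
  qed
  have euler: "(\<integral>x. G x \<partial>lborel) = - real DIM('a) * (\<integral>x. H x \<partial>lborel)"
    by (rule euler_int[OF Hc(1) Gc(1) _ _ derHG]) (use Hsupp in auto)
  define A where "A = (\<integral>x. (f x)^2 * W x \<partial>lborel)"
  define B where "B = (\<integral>x. (D x)^2 * W x \<partial>lborel)"
  define M where "M = (\<integral>x. f x * D x * W x \<partial>lborel)"
  have iA: "integrable lborel (\<lambda>x. (f x)^2 * W x)"
    using intW[OF c2] f0 by auto
  have iB: "integrable lborel (\<lambda>x. (D x)^2 * W x)"
    using intW[OF c3] Dzero by auto
  have iM: "integrable lborel (\<lambda>x. f x * D x * W x)"
    using intW[OF c4] f0 by auto
  have "(\<integral>x. G x \<partial>lborel) = (\<integral>x. 2 * (f x * D x * W x) + p * ((f x)^2 * W x) \<partial>lborel)"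
    by (rule arg_cong[where f="integral\<^sup>L lborel"]) (auto simp: G_def fun_eq_iff algebra_simps)
  also have "\<dots> = 2 * M + p * A" using iA iM by (simp add: M_def A_def)
  finally have "2 * M + p * A = - real DIM('a) * A" using euler by (simp add: H_def A_def)
  hence MA: "M = ((2 * \<alpha> + 2 - real DIM('a)) / 2) * A" by (simp add: p_def field_simps)
  have CS: "M^2 \<le> A * B" unfolding M_def A_def B_def by (rule cauchy_schwarz_w[OF iA iB iM Wnn])
  have L2A: "L2norm (\<lambda>x. f x / q x powr (\<alpha> + 1)) = sqrt A"
  proof -
    have "(f x / q x powr (\<alpha> + 1))^2 = (f x)^2 * W x" for x
    proof (cases "x = 0")
      case True thus ?thesis using f0 S0 by simp
    next
      case False
      hence "q x > 0" using qc(2,4) by (metis less_eq_real_def)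
      hence qp: "q x powr (2*\<alpha>+2) > 0" by simp
      have e1: "(q x powr (\<alpha>+1))^2 = q x powr (2*\<alpha>+2)"
      proof -
        have "(q x powr (\<alpha>+1))^2 = q x powr ((\<alpha>+1)+(\<alpha>+1))" by (simp only: power2_eq_square powr_add[symmetric])
        also have "(\<alpha>+1)+(\<alpha>+1) = 2*\<alpha>+2" by simp
        finally show ?thesis .
      qed
      have e2: "W x = 1 / q x powr (2*\<alpha>+2)" unfolding W_def p_def by (simp only: powr_minus divide_inverse mult_1)
      show ?thesis using qp by (simp add: power_divide e1 e2)
    qed
    thus ?thesis by (simp add: L2norm_def A_def)
  qed
  have L2B: "L2norm (\<lambda>x. radial_deriv q f x / q x powr \<alpha>) = sqrt B"
  proof -
    have "(radial_deriv q f x / q x powr \<alpha>)^2 = (D x)^2 * W x" for x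
    proof (cases "x = 0")
      case True thus ?thesis using Dzero S0 by (simp add: radial)
    next
      case False
      hence "q x > 0" using qc(2,4) by (metis less_eq_real_def)
      hence qp: "q x powr (2*\<alpha>+2) > 0" by simp
      have e1: "(q x * q x powr \<alpha>)^2 = q x powr (2*\<alpha>+2)"
      proof -
        have "(q x * q x powr \<alpha>)^2 = q x powr 1 * q x powr 1 * q x powr \<alpha> * q x powr \<alpha>"
          using \<open>q x > 0\<close> by (simp add: power2_eq_square)
        also have "\<dots> = q x powr (1 + 1 + \<alpha> + \<alpha>)" by (simp only: powr_add)
        also have "1 + 1 + \<alpha> + \<alpha> = 2*\<alpha>+2" by simp
        finally show ?thesis .
      qed
      have e2: "W x = 1 / q x powr (2*\<alpha>+2)" unfolding W_def p_def by (simp only: powr_minus divide_inverse mult_1)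
      have "radial_deriv q f x / q x powr \<alpha> = D x / (q x * q x powr \<alpha>)" by (simp add: radial)
      thus ?thesis using qp by (simp add: power_divide e1 e2)
    qed
    thus ?thesis by (simp add: L2norm_def B_def)
  qed
  define c where "c = (2 * \<alpha> + 2 - real DIM('a)) / 2"
  have cabs: "\<bar>real DIM('a) - 2 - 2 * \<alpha>\<bar> / 2 = \<bar>c\<bar>" by (simp add: c_def abs_minus_commute)
  have A0: "A \<ge> 0" unfolding A_def using Wnn by (intro integral_nonneg_AE) auto
  have B0: "B \<ge> 0" unfolding B_def using Wnn by (intro integral_nonneg_AE) auto
  have "\<bar>c\<bar> * sqrt A \<le> sqrt B"
  proof (cases "A = 0")
    case True thus ?thesis using B0 by simp
  next
    case False
    hence Ap: "A > 0" using A0 by simp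
    have "M = c * A" using MA by (simp add: c_def)
    hence "c^2 * A^2 \<le> A * B" using CS by (simp add: power_mult_distrib)
    hence "c^2 * A \<le> B" using Ap by (simp add: power2_eq_square mult.assoc mult_le_cancel_left_pos)
    hence "sqrt (c^2 * A) \<le> sqrt B" by (rule real_sqrt_le_mono)
    thus ?thesis by (simp add: real_sqrt_mult)
  qed
  thus ?thesis using L2A L2B cabs by simp
qed

coinductive smo :: "real set \<Rightarrow> (real \<Rightarrow> real) \<Rightarrow> bool" for U where
  "(\<And>x. x \<in> U \<Longrightarrow> (f has_real_derivative f' x) (at x)) \<Longrightarrow> smo U f' \<Longrightarrow> smo U f"

lemma smo_coI:
  assumes "X f"
    and "\<And>g. X g \<Longrightarrow> \<exists>g'. (\<forall>x\<in>U. (g has_real_derivative g' x) (at x)) \<and> (X g' \<or> smo U g')"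
  shows "smo U f"
  using assms(1)
proof (rule smo.coinduct[where X=X])
  fix g assume "X g"
  thus "\<exists>f f'. g = f \<and> (\<forall>x. x \<in> U \<longrightarrow> (f has_real_derivative f' x) (at x)) \<and> (X f' \<or> smo U f')"
    using assms(2) by blast
qed

definition dv :: "real set \<Rightarrow> (real \<Rightarrow> real) \<Rightarrow> (real \<Rightarrow> real)" where
  "dv U f = (SOME f'. (\<forall>x\<in>U. (f has_real_derivative f' x) (at x)) \<and> smo U f')"

lemma smo_dv:
  assumes "smo U f"
  shows "\<And>x. x \<in> U \<Longrightarrow> (f has_real_derivative dv U f x) (at x)" "smo U (dv U f)"
proof -
  have "\<exists>f'. (\<forall>x\<in>U. (f has_real_derivative f' x) (at x)) \<and> smo U f'"
    using assms by (rule smo.cases) blast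
  hence "(\<forall>x\<in>U. (f has_real_derivative dv U f x) (at x)) \<and> smo U (dv U f)"
    unfolding dv_def by (rule someI_ex)
  thus "\<And>x. x \<in> U \<Longrightarrow> (f has_real_derivative dv U f x) (at x)" "smo U (dv U f)" by auto
qed

lemma smo_cong:
  assumes "smo U f" "open U" "\<And>x. x \<in> U \<Longrightarrow> f x = g x"
  shows "smo U g"
proof (rule smo_coI[where X="\<lambda>g. \<exists>f. smo U f \<and> (\<forall>x\<in>U. f x = g x)"])
  show "\<exists>f. smo U f \<and> (\<forall>x\<in>U. f x = g x)" using assms by auto
next
  fix g assume "\<exists>f. smo U f \<and> (\<forall>x\<in>U. f x = g x)"
  then obtain f where f: "smo U f" "\<forall>x\<in>U. f x = g x" by auto
  have "(g has_real_derivative dv U f x) (at x)" if "x \<in> U" for x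
    by (rule has_field_derivative_transform_within_open[OF smo_dv(1)[OF f(1) that] assms(2) that])
      (use f in auto)
  thus "\<exists>g'. (\<forall>x\<in>U. (g has_real_derivative g' x) (at x)) \<and>
    ((\<exists>f. smo U f \<and> (\<forall>x\<in>U. f x = g' x)) \<or> smo U g')"
    using smo_dv(2)[OF f(1)] by blast
qed

lemma smo_const: "smo U (\<lambda>_. c)"
  by (rule smo_coI[where X="\<lambda>g. \<exists>c. g = (\<lambda>_. c)"]) (auto intro!: exI[of _ "\<lambda>_. 0"])

definition sp :: "((real \<Rightarrow> real) \<times> (real \<Rightarrow> real)) list \<Rightarrow> real \<Rightarrow> real" where
  "sp L = (\<lambda>x. sum_list (map (\<lambda>(a, b). a x * b x) L))"

lemma sp_deriv:
  assumes "\<And>a b. (a, b) \<in> set L \<Longrightarrow> smo U a \<and> smo U b" "x \<in> U"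
  shows "(sp L has_real_derivative sp (concat (map (\<lambda>(a, b). [(dv U a, b), (a, dv U b)]) L)) x) (at x)"
  using assms(1)
proof (induction L)
  case Nil thus ?case by (simp add: sp_def)
next
  case (Cons p L)
  obtain a b where p: "p = (a, b)" by (cases p)
  have ab: "smo U a" "smo U b" using Cons.prems p by auto
  have m: "((\<lambda>x. a x * b x) has_real_derivative dv U a x * b x + a x * dv U b x) (at x)"
    by (rule DERIV_mult[OF smo_dv(1)[OF ab(1) assms(2)] smo_dv(1)[OF ab(2) assms(2)], THEN DERIV_cong])
      (simp add: algebra_simps)
  have "((\<lambda>x. a x * b x + sp L x) has_real_derivative
      (dv U a x * b x + a x * dv U b x) + sp (concat (map (\<lambda>(a, b). [(dv U a, b), (a, dv U b)]) L)) x) (at x)"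
    by (intro DERIV_add m Cons.IH) (use Cons.prems in auto)
  thus ?case by (simp add: p sp_def add.assoc)
qed

lemma smo_sp:
  assumes "\<And>a b. (a, b) \<in> set L \<Longrightarrow> smo U a \<and> smo U b"
  shows "smo U (sp L)"
proof (rule smo_coI[where X="\<lambda>g. \<exists>L. g = sp L \<and> (\<forall>a b. (a, b) \<in> set L \<longrightarrow> smo U a \<and> smo U b)"])
  show "\<exists>L'. sp L = sp L' \<and> (\<forall>a b. (a, b) \<in> set L' \<longrightarrow> smo U a \<and> smo U b)" using assms by auto
next
  fix g assume "\<exists>L. g = sp L \<and> (\<forall>a b. (a, b) \<in> set L \<longrightarrow> smo U a \<and> smo U b)"
  then obtain L where L: "g = sp L" "\<And>a b. (a, b) \<in> set L \<Longrightarrow> smo U a \<and> smo U b" by auto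
  define L' where "L' = concat (map (\<lambda>(a, b). [(dv U a, b), (a, dv U b)]) L)"
  have "\<And>a b. (a, b) \<in> set L' \<Longrightarrow> smo U a \<and> smo U b"
    using L(2) smo_dv(2) unfolding L'_def by fastforce
  thus "\<exists>g'. (\<forall>x\<in>U. (g has_real_derivative g' x) (at x)) \<and>
         ((\<exists>L. g' = sp L \<and> (\<forall>a b. (a, b) \<in> set L \<longrightarrow> smo U a \<and> smo U b)) \<or> smo U g')"
    using sp_deriv[OF L(2)] L(1) by (intro exI[of _ "sp L'"]) (auto simp: L'_def)
qed

lemma smo_mult: "smo U a \<Longrightarrow> smo U b \<Longrightarrow> smo U (\<lambda>x. a x * b x)"
  using smo_sp[of "[(a, b)]" U] by (simp add: sp_def)

lemma smo_add: "smo U a \<Longrightarrow> smo U b \<Longrightarrow> smo U (\<lambda>x. a x + b x)"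
proof -
  assume "smo U a" "smo U b"
  hence "smo U (sp [(a, \<lambda>_. 1), (b, \<lambda>_. 1)])" using smo_const[of U 1] by (intro smo_sp) auto
  thus ?thesis by (simp add: sp_def)
qed

lemma smo_cmult: "smo U a \<Longrightarrow> smo U (\<lambda>x. c * a x)"
  using smo_mult[OF smo_const] by blast

lemma smo_id: "smo U (\<lambda>x. x)"
proof (rule smo.intros)
  show "\<And>x. x \<in> U \<Longrightarrow> ((\<lambda>x. x) has_real_derivative (\<lambda>_. 1) x) (at x)" by (auto intro!: derivative_eq_intros)
qed (rule smo_const)

definition sc :: "((real \<Rightarrow> real) \<times> (real \<Rightarrow> real)) list \<Rightarrow> (real \<Rightarrow> real) \<Rightarrow> real \<Rightarrow> real" where
  "sc L g = (\<lambda>x. sum_list (map (\<lambda>(a, b). a (g x) * b x) L))"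

lemma smo_compose:
  assumes "smo V \<phi>" "smo U g" "\<And>x. x \<in> U \<Longrightarrow> g x \<in> V"
  shows "smo U (\<lambda>x. \<phi> (g x))"
proof -
  have "smo U (sc [(\<phi>, \<lambda>_. 1)] g)"
  proof (rule smo_coI[where X="\<lambda>h. \<exists>L. h = sc L g \<and> (\<forall>a b. (a, b) \<in> set L \<longrightarrow> smo V a \<and> smo U b)"])
    show "\<exists>L. sc [(\<phi>, \<lambda>_. 1)] g = sc L g \<and> (\<forall>a b. (a, b) \<in> set L \<longrightarrow> smo V a \<and> smo U b)"
      using assms(1) smo_const by fastforce
  next
    fix h assume "\<exists>L. h = sc L g \<and> (\<forall>a b. (a, b) \<in> set L \<longrightarrow> smo V a \<and> smo U b)"
    then obtain L where L: "h = sc L g" "\<And>a b. (a, b) \<in> set L \<Longrightarrow> smo V a \<and> smo U b" by auto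
    define L' where "L' = concat (map (\<lambda>(a, b). [(dv V a, \<lambda>x. dv U g x * b x), (a, dv U b)]) L)"
    have L'ok: "\<And>a b. (a, b) \<in> set L' \<Longrightarrow> smo V a \<and> smo U b"
      using L(2) smo_dv(2) smo_mult[OF smo_dv(2)[OF assms(2)]] unfolding L'_def by fastforce
    have der: "(sc L g has_real_derivative sc L' g x) (at x)" if x: "x \<in> U" for x
      unfolding L'_def using L(2)
    proof (induction L)
      case Nil thus ?case by (simp add: sc_def)
    next
      case (Cons p L)
      obtain a b where p: "p = (a, b)" by (cases p)
      have ab: "smo V a" "smo U b" using Cons.prems p by auto
      have m: "((\<lambda>x. a (g x) * b x) has_real_derivative dv V a (g x) * dv U g x * b x + a (g x) * dv U b x) (at x)"
        by (rule DERIV_mult[OF DERIV_chain2[OF smo_dv(1)[OF ab(1) assms(3)[OF x]] smo_dv(1)[OF assms(2) x]]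
            smo_dv(1)[OF ab(2) x], THEN DERIV_cong]) (simp add: algebra_simps)
      have "((\<lambda>x. a (g x) * b x + sc L g x) has_real_derivative
          (dv V a (g x) * dv U g x * b x + a (g x) * dv U b x) + sc (concat (map (\<lambda>(a, b). [(dv V a, \<lambda>x. dv U g x * b x), (a, dv U b)]) L)) g x) (at x)"
        by (intro DERIV_add m Cons.IH) (use Cons.prems in auto)
      thus ?case by (simp add: p sc_def algebra_simps)
    qed
    show "\<exists>g'. (\<forall>x\<in>U. (h has_real_derivative g' x) (at x)) \<and>
           ((\<exists>L. g' = sc L g \<and> (\<forall>a b. (a, b) \<in> set L \<longrightarrow> smo V a \<and> smo U b)) \<or> smo U g')"
      using L'ok der L(1) by (intro exI[of _ "sc L' g"]) auto
  qed
  moreover have "sc [(\<phi>, \<lambda>_. 1)] g = (\<lambda>x. \<phi> (g x))" by (simp add: sc_def)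
  ultimately show ?thesis by simp
qed

lemma smo_powr: "smo {0<..} (\<lambda>x. x powr a)"
proof -
  show ?thesis
  proof (rule smo_coI[where X="\<lambda>h. \<exists>c b. h = (\<lambda>x. c * x powr b)"])
    show "\<exists>c b. (\<lambda>x. x powr a) = (\<lambda>x. c * x powr b)" by (rule exI[of _ 1]) auto
  next
    fix h assume "\<exists>c b. h = (\<lambda>x::real. c * x powr b)"
    then obtain c b where h: "h = (\<lambda>x::real. c * x powr b)" by auto
    have "\<forall>x\<in>{0<..}. (h has_real_derivative (c * b) * x powr (b - 1)) (at x)"
      unfolding h by (auto intro!: derivative_eq_intros)
    thus "\<exists>g'. (\<forall>x\<in>{0<..}. (h has_real_derivative g' x) (at x)) \<and>
      ((\<exists>c b. g' = (\<lambda>x. c * x powr b)) \<or> smo {0<..} g')"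
      by (intro exI[of _ "\<lambda>x. (c * b) * x powr (b - 1)"]) auto
  qed
qed

lemma smo_ln: "smo {0<..} ln"
proof (rule smo.intros)
  show "\<And>x. x \<in> {0<..} \<Longrightarrow> (ln has_real_derivative (\<lambda>x. x powr (-1)) x) (at x)"
    by (auto intro: DERIV_ln[THEN DERIV_cong] simp: powr_minus)
qed (rule smo_powr)

lemma smo_subset: "smo U f \<Longrightarrow> V \<subseteq> U \<Longrightarrow> smo V f"
  by (rule smo_coI[where X="\<lambda>g. smo U g"]) (use smo_dv in blast)+

definition eb :: "(real \<times> nat) list \<Rightarrow> real \<Rightarrow> real" where
  "eb L t = (if t > 0 then (\<Sum>(c, m)\<leftarrow>L. c * inverse t ^ m) * exp (- inverse t) else 0)"

definition dL :: "(real \<times> nat) list \<Rightarrow> (real \<times> nat) list" where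
  "dL L = concat (map (\<lambda>(c, m). [(c, m + 2), (- (c * real m), m + 1)]) L)"

lemma pow_exp_lim: "((\<lambda>u::real. u ^ k * exp (- u)) \<longlongrightarrow> 0) at_top"
  using tendsto_power_div_exp_0[of k] by (simp add: exp_minus divide_inverse)

lemma pow_exp_lim0: "((\<lambda>s::real. c * (inverse s ^ k * exp (- inverse s))) \<longlongrightarrow> 0) (at_right 0)"
proof -
  have "((\<lambda>s::real. inverse s ^ k * exp (- inverse s)) \<longlongrightarrow> 0) (at_right 0)"
    using filterlim_compose[OF pow_exp_lim filterlim_inverse_at_top_right] by (simp add: o_def)
  thus ?thesis using tendsto_mult[OF tendsto_const[of c]] by fastforce
qed

lemma eb_deriv_pos:
  assumes "t > 0"
  shows "((\<lambda>t. (\<Sum>(c, m)\<leftarrow>L. c * inverse t ^ m) * exp (- inverse t)) has_real_derivative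
           (\<Sum>(c, m)\<leftarrow>dL L. c * inverse t ^ m) * exp (- inverse t)) (at t)"
proof (induction L)
  case Nil thus ?case by (simp add: dL_def)
next
  case (Cons p L)
  obtain c m where p: "p = (c, m)" by (cases p)
  have "((\<lambda>t. c * inverse t ^ m * exp (- inverse t)) has_real_derivative
          (c * inverse t ^ (m + 2) - c * real m * inverse t ^ (m + 1)) * exp (- inverse t)) (at t)"
  proof -
    have "((\<lambda>t. c * inverse t ^ m * exp (- inverse t)) has_real_derivative
          c * (real m * inverse t ^ (m - 1) * (- (inverse t * inverse t))) * exp (- inverse t)
            + c * inverse t ^ m * (exp (- inverse t) * (inverse t * inverse t))) (at t)"
      using assms by (auto intro!: derivative_eq_intros simp: power2_eq_square)
    moreover have "c * (real m * inverse t ^ (m - 1) * (- (inverse t * inverse t))) * exp (- inverse t)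
            + c * inverse t ^ m * (exp (- inverse t) * (inverse t * inverse t)) =
          (c * inverse t ^ (m + 2) - c * real m * inverse t ^ (m + 1)) * exp (- inverse t)"
    proof (cases m)
      case 0 thus ?thesis by (simp add: power2_eq_square algebra_simps)
    next
      case (Suc j) thus ?thesis by (simp add: power2_eq_square algebra_simps)
    qed
    ultimately show ?thesis by simp
  qed
  from DERIV_add[OF this Cons.IH]
  show ?case by (simp add: p dL_def algebra_simps sum_list_addf)
qed

lemma sl_aux: "(\<Sum>(c, m)\<leftarrow>L. c * (inverse y * inverse y ^ m * exp (- inverse y))) =
   (\<Sum>(c, m)\<leftarrow>L. c * inverse y ^ m) * exp (- inverse y) / (y::real)"
  by (induction L) (auto simp: divide_inverse algebra_simps)

lemma eb_deriv: "(eb L has_real_derivative eb (dL L) t) (at t)"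
proof (cases "t > 0")
  case True
  have "(eb L has_real_derivative (\<Sum>(c, m)\<leftarrow>dL L. c * inverse t ^ m) * exp (- inverse t)) (at t)"
    by (rule has_field_derivative_transform_within_open[OF eb_deriv_pos[OF True], of "{0<..}"])
      (use True in \<open>auto simp: eb_def\<close>)
  thus ?thesis using True by (simp add: eb_def)
next
  case False
  show ?thesis
  proof (cases "t < 0")
    case True
    have "((\<lambda>_. 0) has_real_derivative 0) (at t)" by simp
    thus ?thesis
      by (rule has_field_derivative_transform_within_open[of _ _ _ "{..<0}", THEN DERIV_cong])
        (use True in \<open>auto simp: eb_def\<close>)
  next
    case False
    hence t0: "t = 0" using \<open>\<not> t > 0\<close> by simp
    have "((\<lambda>s. (eb L s - eb L 0) / (s - 0)) \<longlongrightarrow> 0) (at 0)"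
    proof (rule filterlim_split_at)
      show "((\<lambda>s. (eb L s - eb L 0) / (s - 0)) \<longlongrightarrow> 0) (at_left 0)"
        by (rule tendsto_eventually) (auto simp: eb_def eventually_at_left_field intro!: exI[of _ "-1"])
      have lim: "((\<lambda>s. \<Sum>(c, m)\<leftarrow>L. c * (inverse s ^ (m + 1) * exp (- inverse s))) \<longlongrightarrow> 0) (at_right (0::real))"
      proof (induction L)
        case Nil thus ?case by simp
      next
        case (Cons p L)
        obtain c m where p: "p = (c, m)" by (cases p)
        show ?case using tendsto_add[OF pow_exp_lim0[of c "m + 1"] Cons.IH] by (simp add: p)
      qed
      show "((\<lambda>s. (eb L s - eb L 0) / (s - 0)) \<longlongrightarrow> 0) (at_right 0)"
      proof (rule tendsto_cong[THEN iffD1, OF _ lim])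
        show "\<forall>\<^sub>F x in at_right 0. (\<Sum>(c, m)\<leftarrow>L. c * (inverse x ^ (m + 1) * exp (- inverse x))) =
          (eb L x - eb L 0) / (x - 0)"
          unfolding eventually_at_right_field
          by (rule exI[of _ 1]) (auto simp: eb_def sl_aux)
      qed
    qed
    moreover have "eb (dL L) 0 = 0" by (simp add: eb_def)
    ultimately show ?thesis using t0 by (simp add: has_field_derivative_iff)
  qed
qed

lemma smo_eb: "smo U (eb L)"
proof (rule smo_coI[where X="\<lambda>g. \<exists>L. g = eb L"])
  fix g assume "\<exists>L. g = eb L"
  then obtain L where "g = eb L" by auto
  thus "\<exists>g'. (\<forall>x\<in>U. (g has_real_derivative g' x) (at x)) \<and> ((\<exists>L. g' = eb L) \<or> smo U g')"
    by (intro exI[of _ "eb (dL L)"]) (auto intro: eb_deriv)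
qed auto

definition bump :: "real \<Rightarrow> real" where
  "bump s = eb [(1, 0)] (1 + s) * eb [(1, 0)] (1 - s)"

lemma eb1: "eb [(1, 0)] t = (if t > 0 then exp (- inverse t) else 0)"
  by (simp add: eb_def)

lemma smo_bump: "smo UNIV bump"
proof -
  have a: "smo UNIV (\<lambda>s::real. 1 + s)" by (intro smo_add smo_const smo_id)
  have "smo UNIV (\<lambda>s::real. 1 + (-1) * s)" by (intro smo_add smo_const smo_cmult smo_id)
  hence b: "smo UNIV (\<lambda>s::real. 1 - s)" by (rule smo_cong) auto
  have "smo UNIV (\<lambda>s. eb [(1, 0)] (1 + s) * eb [(1, 0)] (1 - s))"
    by (intro smo_mult smo_compose[OF smo_eb a] smo_compose[OF smo_eb b]) auto
  thus ?thesis unfolding bump_def[abs_def] .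
qed

lemma bump_zero: "\<bar>s\<bar> \<ge> 1 \<Longrightarrow> bump s = 0"
  by (auto simp: bump_def eb1)

lemma bump_nn: "bump s \<ge> 0"
  by (auto simp: bump_def eb1)

lemma bump_pos: "\<bar>s\<bar> \<le> 1/2 \<Longrightarrow> bump s \<ge> exp (-4)"
proof -
  assume s: "\<bar>s\<bar> \<le> 1/2"
  have e1: "exp (- inverse (1 + s)) \<ge> exp (-2)"
  proof -
    have "inverse (1 + s) \<le> 2" using s by (auto simp: field_simps abs_le_iff)
    thus ?thesis by simp
  qed
  have e2: "exp (- inverse (1 - s)) \<ge> exp (-2)"
  proof -
    have "inverse (1 - s) \<le> 2" using s by (auto simp: field_simps abs_le_iff)
    thus ?thesis by simp
  qed
  have "exp (-2) * exp (-2) \<le> exp (- inverse (1 + s)) * exp (- inverse (1 - s))"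
    using e1 e2 by (intro mult_mono) auto
  moreover have "exp (-2) * exp (-2) = exp (-4::real)" by (simp flip: exp_add)
  moreover have "1 + s > 0" "1 - s > 0" using s by (auto simp: abs_le_iff)
  ultimately show ?thesis by (simp add: bump_def eb1)
qed

definition bump' :: "real \<Rightarrow> real" where "bump' = dv UNIV bump"

lemma bump'_deriv: "(bump has_real_derivative bump' s) (at s)"
  unfolding bump'_def using smo_dv(1)[OF smo_bump] by auto

lemma bump'_cont: "isCont bump' s"
  unfolding bump'_def using smo_dv(1)[OF smo_dv(2)[OF smo_bump]] by (auto intro: DERIV_isCont)

lemma bump'_zero: "\<bar>s\<bar> > 1 \<Longrightarrow> bump' s = 0"
proof -
  assume s: "\<bar>s\<bar> > 1"
  have op: "open {s::real. 1 < \<bar>s\<bar>}" by (intro open_Collect_less continuous_intros)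
  have "((\<lambda>_. 0) has_real_derivative 0) (at s)" by simp
  hence "(bump has_real_derivative 0) (at s)"
    by (rule has_field_derivative_transform_within_open[of _ _ _ "{s. \<bar>s\<bar> > 1}"])
      (use s bump_zero op in auto)
  thus ?thesis using bump'_deriv DERIV_unique by blast
qed

lemma bump'_bound: "\<exists>M. \<forall>s. \<bar>bump' s\<bar> \<le> M"
proof -
  have "compact (bump' ` {-1..1})"
    by (rule compact_continuous_image) (auto intro: continuous_at_imp_continuous_on bump'_cont)
  then obtain M where M: "\<And>y. y \<in> bump' ` {-1..1} \<Longrightarrow> norm y \<le> M"
    using compact_imp_bounded bounded_iff by metis
  have "\<bar>bump' s\<bar> \<le> M" for s
  proof (cases "\<bar>s\<bar> \<le> 1")
    case True thus ?thesis using M[of "bump' s"] by (auto simp: abs_le_iff)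
  next
    case False thus ?thesis using bump'_zero[of s] M[of "bump' 0"] by force
  qed
  thus ?thesis by blast
qed

lemma bump_cont: "isCont bump s"
  using bump'_deriv by (rule DERIV_isCont)

lemma smooth_coI:
  assumes "X f"
    and "\<And>g. X g \<Longrightarrow> (\<forall>x. g differentiable (at x)) \<and>
            (\<forall>v. X (\<lambda>x. frechet_derivative g (at x) v) \<or> smooth_fun (\<lambda>x. frechet_derivative g (at x) v))"
  shows "smooth_fun f"
  using assms(1)
proof (rule smooth_fun.coinduct[where X=X])
  fix g assume "X g"
  thus "\<exists>f. g = f \<and> (\<forall>x. f differentiable at x) \<and>
    (\<forall>v. X (\<lambda>x. frechet_derivative f (at x) v) \<or> smooth_fun (\<lambda>x. frechet_derivative f (at x) v))"
    using assms(2) by blast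
qed

definition PP :: "'a::euclidean_space list \<Rightarrow> 'a \<Rightarrow> real" where
  "PP us x = prod_list (map (\<lambda>u. x \<bullet> u) us)"

fun dP :: "'a::euclidean_space list \<Rightarrow> 'a \<Rightarrow> 'a \<Rightarrow> real" where
  "dP [] x v = 0"
| "dP (u # us) x v = (v \<bullet> u) * PP us x + (x \<bullet> u) * dP us x v"

lemma PP_Cons: "PP (u # us) x = (x \<bullet> u) * PP us x"
  by (simp add: PP_def)

lemma PP_deriv: "(PP us has_derivative dP us x) (at x)"
proof (induction us)
  case Nil
  have e1: "PP [] = (\<lambda>_. 1)" by (simp add: PP_def fun_eq_iff)
  have e2: "dP [] x = (\<lambda>_. 0)" by (simp add: fun_eq_iff)
  show ?case by (subst e1, subst e2) (rule has_derivative_const)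
next
  case (Cons u us)
  have "((\<lambda>x. (x \<bullet> u) * PP us x) has_derivative (\<lambda>v. (x \<bullet> u) * dP us x v + (v \<bullet> u) * PP us x)) (at x)"
    by (rule has_derivative_mult[OF _ Cons.IH]) (auto intro!: derivative_eq_intros)
  moreover have "PP (u # us) = (\<lambda>x. (x \<bullet> u) * PP us x)" by (simp add: PP_def fun_eq_iff)
  moreover have "dP (u # us) x = (\<lambda>v. (x \<bullet> u) * dP us x v + (v \<bullet> u) * PP us x)"
    by (simp add: fun_eq_iff algebra_simps)
  ultimately show ?case by simp
qed

fun dprod :: "'a::euclidean_space \<Rightarrow> 'a list \<Rightarrow> (real \<times> 'a list) list" where
  "dprod v [] = []"
| "dprod v (u # us) = (v \<bullet> u, us) # map (\<lambda>(c, ws). (c, u # ws)) (dprod v us)"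

lemma sum_list_cmult_pairs:
  "(\<Sum>(c, ws)\<leftarrow>L. c * ((x \<bullet> u) * PP ws x)) = (x \<bullet> u) * (\<Sum>(c, ws)\<leftarrow>L. c * PP ws x)"
  by (induction L) (auto simp: algebra_simps)

lemma dP_dprod: "dP us x v = (\<Sum>(c, ws)\<leftarrow>dprod v us. c * PP ws x)"
proof (induction us)
  case Nil thus ?case by simp
next
  case (Cons u us)
  have "(\<Sum>(c, ws)\<leftarrow>map (\<lambda>(c, ws). (c, u # ws)) (dprod v us). c * PP ws x) =
        (\<Sum>(c, ws)\<leftarrow>dprod v us. c * ((x \<bullet> u) * PP ws x))"
    by (simp add: o_def case_prod_unfold PP_Cons)
  also have "\<dots> = (x \<bullet> u) * dP us x v" using Cons.IH by (simp add: sum_list_cmult_pairs)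
  finally show ?case by simp
qed

definition good :: "(real \<Rightarrow> real) \<Rightarrow> bool" where
  "good h \<longleftrightarrow> smo {0<..} h \<and> (\<exists>a>0. \<forall>t. 0 \<le> t \<and> t < a \<longrightarrow> h t = 0)"

definition ht :: "(real \<Rightarrow> real) \<Rightarrow> real \<Rightarrow> real" where
  "ht h t = (if t > 0 then dv {0<..} h t / t else 0)"

definition TT :: "(real \<Rightarrow> real) \<Rightarrow> 'a::euclidean_space list \<Rightarrow> 'a \<Rightarrow> real" where
  "TT h us x = h (norm x) * PP us x"

definition DT :: "(real \<Rightarrow> real) \<Rightarrow> 'a::euclidean_space list \<Rightarrow> 'a \<Rightarrow> 'a \<Rightarrow> real" where
  "DT h us x v = ht h (norm x) * PP (v # us) x + h (norm x) * dP us x v"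

lemma TT_deriv:
  assumes "good h"
  shows "(TT h us has_derivative DT h us x) (at x)"
proof -
  obtain a where a: "a > 0" "\<And>t. 0 \<le> t \<Longrightarrow> t < a \<Longrightarrow> h t = 0" and sh: "smo {0<..} h"
    using assms unfolding good_def by auto
  show ?thesis
  proof (cases "x = 0")
    case True
    have "((\<lambda>_. 0) has_derivative (\<lambda>_. 0)) (at x)" by simp
    hence "(TT h us has_derivative (\<lambda>_. 0)) (at x)"
      by (rule has_derivative_transform_within_open[where s="ball 0 a"])
        (use True a in \<open>auto simp: TT_def\<close>)
    moreover have "DT h us x = (\<lambda>_. 0)" using True a by (auto simp: DT_def ht_def fun_eq_iff)
    ultimately show ?thesis by simp
  next
    case False
    hence nx: "norm x > 0" by simp
    have g: "GDERIV (\<lambda>x. h (norm x)) x :> dv {0<..} h (norm x) *\<^sub>R sgn x"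
      by (rule GDERIV_DERIV_compose[OF GDERIV_norm[OF False] smo_dv(1)[OF sh]]) (use nx in auto)
    hence g': "((\<lambda>x. h (norm x)) has_derivative (\<lambda>v. v \<bullet> (dv {0<..} h (norm x) *\<^sub>R sgn x))) (at x)"
      by (simp add: gderiv_def)
    have "(TT h us has_derivative (\<lambda>v. h (norm x) * dP us x v + v \<bullet> (dv {0<..} h (norm x) *\<^sub>R sgn x) * PP us x)) (at x)"
      unfolding TT_def[abs_def] by (rule has_derivative_mult[OF g' PP_deriv])
    moreover have "(\<lambda>v. h (norm x) * dP us x v + v \<bullet> (dv {0<..} h (norm x) *\<^sub>R sgn x) * PP us x) = DT h us x"
      using nx by (auto simp: DT_def ht_def fun_eq_iff PP_Cons sgn_div_norm inner_commute divide_inverse algebra_simps)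
    ultimately show ?thesis by simp
  qed
qed

lemma good_ht:
  assumes "good h" shows "good (ht h)"
proof -
  obtain a where a: "a > 0" "\<And>t. 0 \<le> t \<Longrightarrow> t < a \<Longrightarrow> h t = 0" and sh: "smo {0<..} h"
    using assms unfolding good_def by auto
  have "smo {0<..} (\<lambda>t. dv {0<..} h t * t powr (-1))"
    by (intro smo_mult smo_dv(2)[OF sh] smo_powr)
  hence s: "smo {0<..} (ht h)"
    by (rule smo_cong) (auto simp: ht_def powr_minus divide_inverse)
  have "ht h t = 0" if "0 \<le> t" "t < a" for t
  proof (cases "t = 0")
    case True thus ?thesis by (simp add: ht_def)
  next
    case False
    hence tp: "t > 0" using that by simp
    have "((\<lambda>_. 0) has_real_derivative 0) (at t)" by simp
    hence "(h has_real_derivative 0) (at t)"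
      by (rule has_field_derivative_transform_within_open[of _ _ _ "{0<..<a}"]) (use that tp a in auto)
    hence "dv {0<..} h t = 0" using smo_dv(1)[OF sh, of t] tp DERIV_unique by auto
    thus ?thesis by (simp add: ht_def)
  qed
  thus ?thesis using s a(1) unfolding good_def by blast
qed

lemma good_cmult: "good h \<Longrightarrow> good (\<lambda>t. c * h t)"
  unfolding good_def using smo_cmult by fastforce

definition SF :: "((real \<Rightarrow> real) \<times> 'a::euclidean_space list) list \<Rightarrow> 'a \<Rightarrow> real" where
  "SF L x = (\<Sum>(h, us)\<leftarrow>L. TT h us x)"

definition DSF :: "((real \<Rightarrow> real) \<times> 'a::euclidean_space list) list \<Rightarrow> 'a \<Rightarrow> 'a \<Rightarrow> real" where
  "DSF L x v = (\<Sum>(h, us)\<leftarrow>L. DT h us x v)"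

lemma SF_deriv:
  assumes "\<And>h us. (h, us) \<in> set L \<Longrightarrow> good h"
  shows "(SF L has_derivative DSF L x) (at x)"
  using assms
proof (induction L)
  case Nil
  have e1: "SF [] = (\<lambda>_. 0)" and e2: "DSF [] x = (\<lambda>_. 0)" by (auto simp: SF_def DSF_def fun_eq_iff)
  show ?case by (subst e1, subst e2) (rule has_derivative_const)
next
  case (Cons p L)
  obtain h us where p: "p = (h, us)" by (cases p)
  have "((\<lambda>x. TT h us x + SF L x) has_derivative (\<lambda>v. DT h us x v + DSF L x v)) (at x)"
    by (rule has_derivative_add[OF TT_deriv Cons.IH]) (use Cons.prems p in auto)
  moreover have "SF (p # L) = (\<lambda>x. TT h us x + SF L x)" by (simp add: SF_def p fun_eq_iff)
  moreover have "DSF (p # L) x = (\<lambda>v. DT h us x v + DSF L x v)" by (simp add: DSF_def p fun_eq_iff)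
  ultimately show ?case by simp
qed

definition LD :: "'a::euclidean_space \<Rightarrow> ((real \<Rightarrow> real) \<times> 'a list) list \<Rightarrow> ((real \<Rightarrow> real) \<times> 'a list) list" where
  "LD v L = concat (map (\<lambda>(h, us). (ht h, v # us) # map (\<lambda>(c, ws). (\<lambda>t. c * h t, ws)) (dprod v us)) L)"

lemma sum_list_TT_aux:
  "(\<Sum>(h', ws)\<leftarrow>map (\<lambda>(c, ws). (\<lambda>t. c * h t, ws)) M. TT h' ws x) = h (norm x) * (\<Sum>(c, ws)\<leftarrow>M. c * PP ws x)"
  by (induction M) (auto simp: TT_def algebra_simps)

lemma DSF_LD: "DSF L x v = SF (LD v L) x"
proof (induction L)
  case Nil thus ?case by (simp add: DSF_def SF_def LD_def)
next
  case (Cons p L)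
  obtain h us where p: "p = (h, us)" by (cases p)
  have "DT h us x v = TT (ht h) (v # us) x + (\<Sum>(h', ws)\<leftarrow>map (\<lambda>(c, ws). (\<lambda>t. c * h t, ws)) (dprod v us). TT h' ws x)"
    unfolding sum_list_TT_aux DT_def dP_dprod by (simp add: TT_def)
  thus ?case using Cons.IH by (simp add: DSF_def SF_def LD_def p)
qed

lemma LD_good:
  assumes "\<And>h us. (h, us) \<in> set L \<Longrightarrow> good h"
  shows "\<And>h us. (h, us) \<in> set (LD v L) \<Longrightarrow> good h"
  using assms good_ht good_cmult unfolding LD_def by fastforce

lemma smooth_radial:
  fixes h :: "real \<Rightarrow> real"
  assumes "good h"
  shows "smooth_fun (\<lambda>x::'a::euclidean_space. h (norm x))"
proof -
  have "smooth_fun (SF [(h, [] :: 'a list)])"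
  proof (rule smooth_coI[where X="\<lambda>g. \<exists>L. g = SF L \<and> (\<forall>h us. (h, us) \<in> set L \<longrightarrow> good h)"])
    show "\<exists>L. SF [(h, [] :: 'a list)] = SF L \<and> (\<forall>h us. (h, us) \<in> set L \<longrightarrow> good h)"
      using assms by auto
  next
    fix g :: "'a \<Rightarrow> real"
    assume "\<exists>L. g = SF L \<and> (\<forall>h us. (h, us) \<in> set L \<longrightarrow> good h)"
    then obtain L where L: "g = SF L" "\<And>h us. (h, us) \<in> set L \<Longrightarrow> good h" by auto
    have d: "(g has_derivative DSF L x) (at x)" for x using SF_deriv[OF L(2)] L(1) by simp
    have fd: "frechet_derivative g (at x) = DSF L x" for x using d[of x] frechet_derivative_at by metis
    have eq: "(\<lambda>x. frechet_derivative g (at x) v) = SF (LD v L)" for v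
      by (simp add: fd DSF_LD fun_eq_iff)
    have "\<forall>x. g differentiable (at x)" using d by (auto simp: differentiable_def)
    moreover have "\<forall>v. \<exists>L'. (\<lambda>x. frechet_derivative g (at x) v) = SF L' \<and> (\<forall>h us. (h, us) \<in> set L' \<longrightarrow> good h)"
    proof
      fix v
      have "\<And>h us. (h, us) \<in> set (LD v L) \<Longrightarrow> good h"
        by (rule LD_good[where L=L]) (use L(2) in auto)
      thus "\<exists>L'. (\<lambda>x. frechet_derivative g (at x) v) = SF L' \<and> (\<forall>h us. (h, us) \<in> set L' \<longrightarrow> good h)"
        using eq[of v] by blast
    qed
    ultimately show "(\<forall>x. g differentiable (at x)) \<and>
         (\<forall>v. (\<exists>L. (\<lambda>x. frechet_derivative g (at x) v) = SF L \<and> (\<forall>h us. (h, us) \<in> set L \<longrightarrow> good h)) \<or>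
              smooth_fun (\<lambda>x. frechet_derivative g (at x) v))"
      by blast
  qed
  moreover have "SF [(h, [] :: 'a list)] = (\<lambda>x. h (norm x))" by (simp add: SF_def TT_def PP_def fun_eq_iff)
  ultimately show ?thesis by simp
qed

lemma pos_integral:
  fixes g :: "'a::euclidean_space \<Rightarrow> real"
  assumes c: "continuous_on UNIV g" and nn: "\<And>x. g x \<ge> 0" and int: "integrable lborel g"
    and x0: "g x0 > 0"
  shows "(\<integral>x. g x \<partial>lborel) > 0"
proof -
  have "isCont g x0" using c by (simp add: continuous_on_eq_continuous_at)
  then obtain e where e: "e > 0" "\<And>y. dist y x0 < e \<Longrightarrow> dist (g y) (g x0) < g x0 / 2"
    using x0 unfolding continuous_at_eps_delta by (metis half_gt_zero)
  have ge: "indicator (ball x0 e) y * (g x0 / 2) \<le> g y" for y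
  proof (cases "y \<in> ball x0 e")
    case True
    hence "\<bar>g y - g x0\<bar> < g x0 / 2" using e(2)[of y] by (simp add: dist_commute dist_real_def abs_minus_commute)
    hence "g y > g x0 / 2" unfolding abs_less_iff by linarith
    thus ?thesis using True by simp
  qed (use nn in auto)
  have ii: "integrable lborel (\<lambda>y. indicator (ball x0 e) y * (g x0 / 2))"
    by (intro integrable_mult_left integrable_real_indicator) (use emeasure_lborel_ball_finite[of x0 e] in \<open>auto simp: top_unique\<close>)
  have "(\<integral>y. indicator (ball x0 e) y * (g x0 / 2) \<partial>lborel) \<le> (\<integral>x. g x \<partial>lborel)"
    by (rule integral_mono[OF ii int ge])
  moreover have "(\<integral>y. indicator (ball x0 e) y * (g x0 / 2) \<partial>lborel) = measure lborel (ball x0 e) * (g x0 / 2)"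
    by simp
  moreover have "measure lborel (ball x0 e) > 0" using content_ball_pos[OF e(1)] by simp
  ultimately show ?thesis using x0 by (smt (verit) mult_pos_pos half_gt_zero)
qed

lemma radial_int:
  fixes K :: "'a::euclidean_space \<Rightarrow> real" and g :: "real \<Rightarrow> real"
  assumes Kc: "\<And>x. x \<noteq> 0 \<Longrightarrow> isCont K x" and K0: "K 0 = 0"
    and gc: "continuous_on UNIV g" and gs: "\<And>s. \<bar>s\<bar> \<ge> L \<Longrightarrow> g s = 0"
  shows "continuous_on UNIV (\<lambda>x. K x * g (ln (norm x)))" "integrable lborel (\<lambda>x. K x * g (ln (norm x)))"
proof -
  show c: "continuous_on UNIV (\<lambda>x. K x * g (ln (norm x)))"
  proof (rule cont_away[where r="exp (- L)"])
    fix x :: 'a assume x: "x \<noteq> 0"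
    have "isCont (\<lambda>x. g (ln (norm x))) x"
      by (rule continuous_at_compose[of _ "\<lambda>x. ln (norm x)", unfolded o_def])
        (use x gc in \<open>auto intro!: continuous_intros simp: continuous_on_eq_continuous_at\<close>)
    thus "isCont (\<lambda>x. K x * g (ln (norm x))) x" using Kc[OF x] by (intro continuous_intros)
  next
    fix x :: 'a assume "norm x < exp (- L)"
    show "K x * g (ln (norm x)) = 0"
    proof (cases "x = 0")
      case True thus ?thesis using K0 by simp
    next
      case False
      hence "ln (norm x) < ln (exp (- L))" using \<open>norm x < exp (- L)\<close>
        by (subst ln_less_cancel_iff) auto
      hence "ln (norm x) < - L" by simp
      thus ?thesis using gs[of "ln (norm x)"] by simp
    qed
  qed simp
  show "integrable lborel (\<lambda>x. K x * g (ln (norm x)))"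
  proof (rule cs_integrable[OF c, of "exp L"])
    fix x :: 'a assume "exp L < norm x"
    hence "L < ln (norm x)" by (metis exp_gt_zero less_trans ln_exp ln_less_cancel_iff)
    thus "K x * g (ln (norm x)) = 0" using gs[of "ln (norm x)"] by simp
  qed
qed

lemma shift_int:
  fixes K :: "'a::euclidean_space \<Rightarrow> real" and g :: "real \<Rightarrow> real"
  assumes Kc: "\<And>x. x \<noteq> 0 \<Longrightarrow> isCont K x" and K0: "K 0 = 0"
    and Khom: "\<And>l x. l > 0 \<Longrightarrow> K (l *\<^sub>R x) = K x / l ^ DIM('a)"
    and gc: "continuous_on UNIV g" and gs: "\<And>s. \<bar>s\<bar> \<ge> L \<Longrightarrow> g s = 0"
  shows "(\<integral>x. K x * g (ln (norm x) + s) \<partial>lborel) = (\<integral>x. K x * g (ln (norm x)) \<partial>lborel)"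
proof -
  define l where "l = exp s"
  have lp: "l > 0" by (simp add: l_def)
  define \<Phi> where "\<Phi> y = K y * g (ln (norm y))" for y :: 'a
  have iP: "integrable lborel \<Phi>" unfolding \<Phi>_def[abs_def] by (rule radial_int(2)[OF Kc K0 gc gs])
  have eq: "\<Phi> (l *\<^sub>R x) = K x * g (ln (norm x) + s) / l ^ DIM('a)" for x
  proof (cases "x = 0")
    case True thus ?thesis using K0 by (simp add: \<Phi>_def)
  next
    case False
    have "ln (norm (l *\<^sub>R x)) = ln (norm x) + s" using lp False by (simp add: l_def ln_mult)
    thus ?thesis using Khom[OF lp, of x] by (simp add: \<Phi>_def)
  qed
  have "(\<integral>x. \<Phi> (l *\<^sub>R x) \<partial>lborel) = (\<integral>x. \<Phi> x \<partial>lborel) / l ^ DIM('a)"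
    by (rule lborel_scale(2)[OF lp iP])
  moreover have "(\<integral>x. \<Phi> (l *\<^sub>R x) \<partial>lborel) = (\<integral>x. K x * g (ln (norm x) + s) \<partial>lborel) / l ^ DIM('a)"
    by (simp add: eq)
  ultimately show ?thesis using lp by (simp add: \<Phi>_def)
qed

lemma bump'_sq_bound:
  assumes M: "\<And>s. \<bar>bump' s\<bar> \<le> M"
  shows "(bump' s)^2 \<le> (M^2 / (exp (-4))^2) * ((bump (s + 1/2))^2 + (bump (s - 1/2))^2)"
proof -
  have M0: "M \<ge> 0" using M[of 0] by simp
  have e: "exp (-4::real) > 0" by simp
  show ?thesis
  proof (cases "\<bar>s\<bar> > 1")
    case True thus ?thesis using bump'_zero[OF True] e by (simp add: zero_le_mult_iff)
  next
    case False
    have "(bump' s)^2 \<le> M^2" using M[of s] by (metis abs_ge_zero power2_abs power_mono)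
    moreover have "(bump (s + 1/2))^2 + (bump (s - 1/2))^2 \<ge> (exp (-4))^2"
    proof (cases "s \<ge> 0")
      case True
      have h: "\<bar>s - 1/2\<bar> \<le> 1/2" using True False by (auto simp: abs_if)
      hence "bump (s - 1/2) \<ge> exp (-4)" by (rule bump_pos)
      hence "(bump (s - 1/2))^2 \<ge> (exp (-4))^2" using e by (intro power_mono) auto
      thus ?thesis by (smt (verit) zero_le_power2)
    next
      case False'': False
      have h: "\<bar>s + 1/2\<bar> \<le> 1/2" using False'' False by (auto simp: abs_if)
      hence "bump (s + 1/2) \<ge> exp (-4)" by (rule bump_pos)
      hence "(bump (s + 1/2))^2 \<ge> (exp (-4))^2" using e by (intro power_mono) auto
      thus ?thesis by (smt (verit) zero_le_power2)
    qed
    ultimately show ?thesis using e M0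
      by (smt (verit, best) divide_nonneg_nonneg le_divide_eq_1 mult_left_mono mult_le_cancel_left1 zero_le_power2 zero_less_power
            mult.commute times_divide_eq_left)
  qed
qed

lemma part2_k:
  fixes q :: "'a::euclidean_space \<Rightarrow> real" and \<alpha> C :: real and k :: nat
  assumes hq: "homogeneous_quasi_norm q"
    and hyp: "\<forall>f \<in> Cc_infty_punctured. C * L2norm (\<lambda>x. f x / q x powr (\<alpha> + 1))
                 \<le> L2norm (\<lambda>x. radial_deriv q f x / q x powr \<alpha>)"
    and M: "\<And>s. \<bar>bump' s\<bar> \<le> M"
    and k: "k \<ge> 1"
  shows "C \<le> \<bar>(real DIM('a) - 2 - 2 * \<alpha>) / 2\<bar> + sqrt 2 * M / (exp (-4) * real k)"
proof -
  note qc = hqn_props[OF hq]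
  define \<beta> where "\<beta> = (real DIM('a) - 2 - 2 * \<alpha>) / 2"
  define \<kappa> where "\<kappa> = real k"
  have kp: "\<kappa> > 0" using k by (simp add: \<kappa>_def)
  have M0: "M \<ge> 0" using M[of 0] by simp
  define c0 where "c0 = exp (-4::real)"
  have c0p: "c0 > 0" by (simp add: c0_def)
  have qpos: "q x > 0" if "x \<noteq> 0" for x using qc(2,4) that by (metis less_eq_real_def)
  define K where "K x = norm x powr (-2 * \<beta>) * q x powr (- (2 * \<alpha> + 2))" for x :: 'a
  have Kc: "isCont K x" if "x \<noteq> 0" for x
  proof -
    have "isCont q x" using qc(1) by (simp add: continuous_on_eq_continuous_at)
    thus ?thesis unfolding K_def using qpos[OF that] that by (intro continuous_intros) auto
  qed
  have K0: "K 0 = 0" by (simp add: K_def)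
  have Knn: "K x \<ge> 0" for x by (simp add: K_def)
  have ex: "-2 * \<beta> + - (2 * \<alpha> + 2) = - real DIM('a)" by (simp add: \<beta>_def field_simps)
  have Khom: "K (l *\<^sub>R x) = K x / l ^ DIM('a)" if l: "l > 0" for l x
  proof -
    have "K (l *\<^sub>R x) = l powr (-2 * \<beta>) * l powr (- (2 * \<alpha> + 2)) * K x"
      using l qc(2,3) by (simp add: K_def powr_mult)
    also have "l powr (-2 * \<beta>) * l powr (- (2 * \<alpha> + 2)) = l powr (- real DIM('a))"
      by (simp only: powr_add[symmetric] ex)
    also have "\<dots> = 1 / l ^ DIM('a)" using l by (simp add: powr_minus powr_realpow divide_inverse)
    finally show ?thesis by simp
  qed
  have RI: "continuous_on UNIV (\<lambda>x. K x * g (ln (norm x)))" "integrable lborel (\<lambda>x. K x * g (ln (norm x)))"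
    if "continuous_on UNIV g" "\<And>s. \<bar>s\<bar> \<ge> 2 * \<kappa> \<Longrightarrow> g s = 0" for g
    using radial_int[OF Kc K0 that] by auto
  have SI: "(\<integral>x. K x * g (ln (norm x) + s) \<partial>lborel) = (\<integral>x. K x * g (ln (norm x)) \<partial>lborel)"
    if "continuous_on UNIV g" "\<And>s. \<bar>s\<bar> \<ge> 2 * \<kappa> \<Longrightarrow> g s = 0" for g s
    using shift_int[OF Kc K0 Khom that] by auto
  define ga where "ga s = bump (s / \<kappa>)" for s
  define gb where "gb s = bump' (s / \<kappa>) / \<kappa>" for s
  have lin: "isCont (\<lambda>s. s / \<kappa>) s" for s using kp by (intro continuous_intros) auto
  have ca: "isCont ga s" for s unfolding ga_def by (rule isCont_o2[OF lin bump_cont])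
  have cb0: "isCont (\<lambda>s. bump' (s / \<kappa>)) s" for s by (rule isCont_o2[OF lin bump'_cont])
  have cb: "isCont gb s" for s unfolding gb_def using cb0[of s] by (rule isCont_divide) (use kp in simp_all)
  have gac: "continuous_on UNIV ga" using ca by (simp add: continuous_at_imp_continuous_on)
  have gbc: "continuous_on UNIV gb" using cb by (simp add: continuous_at_imp_continuous_on)
  have gas: "ga s = 0" if "\<bar>s\<bar> \<ge> \<kappa>" for s
  proof -
    have "\<bar>s / \<kappa>\<bar> \<ge> 1" using that kp by (simp add: abs_div le_divide_eq)
    thus ?thesis unfolding ga_def by (intro bump_zero) simp
  qed
  have gbs: "gb s = 0" if "\<bar>s\<bar> \<ge> 2 * \<kappa>" for s
  proof -
    have "\<bar>s / \<kappa>\<bar> \<ge> 2" using that kp by (simp add: abs_div le_divide_eq)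
    thus ?thesis unfolding gb_def by (subst bump'_zero) auto
  qed

  define \<psi> where "\<psi> t = t powr (-\<beta>) * bump (ln t / \<kappa>)" for t
  have \<psi>van: "\<psi> t = 0" if "0 \<le> t" "t < exp (-\<kappa>)" for t
  proof (cases "t = 0")
    case True thus ?thesis by (simp add: \<psi>_def)
  next
    case False
    hence tp: "t > 0" using that by simp
    have "ln t < ln (exp (-\<kappa>))" using tp that by (subst ln_less_cancel_iff) auto
    hence "ln t < - \<kappa>" by simp
    hence "ln t / \<kappa> < -1" using kp by (simp add: divide_less_eq)
    hence "bump (ln t / \<kappa>) = 0" by (intro bump_zero) (simp add: abs_if)
    thus ?thesis by (simp add: \<psi>_def)
  qed
  have good\<psi>: "good \<psi>"
  proof -
    have "smo {0<..} (\<lambda>t. (1/\<kappa>) * ln t)" by (rule smo_cmult[OF smo_ln])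
    hence s1: "smo {0<..} (\<lambda>t. ln t / \<kappa>)" by (rule smo_cong) auto
    have "smo {0<..} (\<lambda>t. t powr (-\<beta>) * bump (ln t / \<kappa>))"
      by (intro smo_mult smo_powr smo_compose[OF smo_bump s1]) auto
    hence "smo {0<..} \<psi>" by (simp add: \<psi>_def[abs_def])
    thus ?thesis unfolding good_def using \<psi>van by (intro conjI exI[of _ "exp (-\<kappa>)"]) auto
  qed
  define f where "f x = \<psi> (norm x)" for x :: 'a
  have sf: "smooth_fun f" unfolding f_def[abs_def] by (rule smooth_radial[OF good\<psi>])
  have fsupp: "exp (-\<kappa>) \<le> norm x \<and> norm x \<le> exp \<kappa>" if "f x \<noteq> 0" for x
  proof (rule ccontr)
    assume "\<not> (exp (-\<kappa>) \<le> norm x \<and> norm x \<le> exp \<kappa>)"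
    then consider "norm x < exp (-\<kappa>)" | "norm x > exp \<kappa>" by linarith
    thus False
    proof cases
      case 1 thus False using \<psi>van[of "norm x"] that by (simp add: f_def)
    next
      case 2
      hence "ln (exp \<kappa>) < ln (norm x)" by (subst ln_less_cancel_iff) auto
      hence "\<kappa> < ln (norm x)" by simp
      hence "ln (norm x) / \<kappa> > 1" using kp by (simp add: less_divide_eq)
      hence "bump (ln (norm x) / \<kappa>) = 0" by (intro bump_zero) (simp add: abs_if)
      thus False using that by (simp add: f_def \<psi>_def)
    qed
  qed
  have fC: "f \<in> Cc_infty_punctured"
  proof -
    define T where "T = {x::'a. exp (-\<kappa>) \<le> norm x \<and> norm x \<le> exp \<kappa>}"
    have clT: "closed T" unfolding T_def by (intro closed_Collect_conj closed_Collect_le continuous_intros)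
    have sub: "closure {x. f x \<noteq> 0} \<subseteq> T"
      by (rule closure_minimal) (use fsupp clT in \<open>auto simp: T_def\<close>)
    have "bounded T" unfolding T_def by (rule bounded_subset[OF bounded_cball[of 0 "exp \<kappa>"]]) auto
    hence "compact (closure {x. f x \<noteq> 0})"
      using sub clT by (meson bounded_subset closed_closure compact_eq_bounded_closed)
    moreover have "(0::'a) \<notin> T" by (simp add: T_def)
    ultimately show ?thesis using sub sf by (auto simp: Cc_infty_punctured_def)
  qed
  define D where "D x = norm x powr (-\<beta>) * (gb (ln (norm x)) - \<beta> * ga (ln (norm x)))" for x :: 'a
  have rad: "radial_deriv q f x = D x / q x" for x
  proof (cases "x = 0")
    case True
    have "q 0 = 0" using qc(4) by simp
    thus ?thesis using True by (simp add: radial_deriv_def)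
  next
    case False
    define \<rho> where "\<rho> = norm x"
    define r0 where "r0 = q x"
    have \<rho>p: "\<rho> > 0" using False by (simp add: \<rho>_def)
    have r0p: "r0 > 0" using qpos[OF False] by (simp add: r0_def)
    define y where "y = x /\<^sub>R r0"
    define ny where "ny = \<rho> / r0"
    have nyy: "norm y = ny" using r0p by (simp add: y_def ny_def \<rho>_def r0_def divide_inverse mult.commute)
    have nyp: "ny > 0" using \<rho>p r0p by (simp add: ny_def)
    define d\<psi> where "d\<psi> t = bump (ln t / \<kappa>) * ((-\<beta>) * t powr (-\<beta> - 1)) + t powr (-\<beta>) * (bump' (ln t / \<kappa>) * (inverse t / \<kappa>))" for t
    have d\<psi>: "(\<psi> has_real_derivative d\<psi> t) (at t)" if "t > 0" for t
    proof -
      have l: "((\<lambda>t. ln t / \<kappa>) has_real_derivative inverse t / \<kappa>) (at t)"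
        using that kp by (auto intro!: derivative_eq_intros simp: field_simps)
      have b: "((\<lambda>t. bump (ln t / \<kappa>)) has_real_derivative bump' (ln t / \<kappa>) * (inverse t / \<kappa>)) (at t)"
        by (rule DERIV_chain2[OF bump'_deriv l])
      have p: "((\<lambda>t. t powr (-\<beta>)) has_real_derivative (-\<beta>) * t powr (-\<beta> - 1)) (at t)"
        using that by (rule has_real_derivative_powr)
      show ?thesis unfolding \<psi>_def[abs_def] d\<psi>_def
        by (rule DERIV_mult[OF p b, THEN DERIV_cong]) (simp add: algebra_simps)
    qed
    have "((\<lambda>r. \<psi> (r * ny)) has_real_derivative d\<psi> (r0 * ny) * ny) (at r0)"
      by (rule DERIV_chain2[OF d\<psi>]) (use r0p nyp in \<open>auto intro!: derivative_eq_intros\<close>)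
    moreover have "r0 * ny = \<rho>" using r0p by (simp add: ny_def)
    ultimately have "((\<lambda>r. \<psi> (r * ny)) has_real_derivative d\<psi> \<rho> * ny) (at r0)" by simp
    hence "((\<lambda>r. f (r *\<^sub>R y)) has_real_derivative d\<psi> \<rho> * ny) (at r0)"
      by (rule has_field_derivative_transform_within_open[of _ _ _ "{0<..}"])
        (use r0p in \<open>auto simp: f_def nyy\<close>)
    hence "radial_deriv q f x = d\<psi> \<rho> * ny"
      unfolding radial_deriv_def r0_def[symmetric] y_def[symmetric] by (rule DERIV_imp_deriv)
    also have "d\<psi> \<rho> * ny = D x / q x"
    proof -
      have e1: "\<rho> powr (-\<beta> - 1) * \<rho> = \<rho> powr (-\<beta>)"
      proof -
        have "\<rho> powr (-\<beta> - 1) * \<rho> = \<rho> powr (-\<beta> - 1) * \<rho> powr 1" using \<rho>p by simp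
        also have "\<dots> = \<rho> powr (-\<beta> - 1 + 1)" by (simp only: powr_add)
        finally show ?thesis by simp
      qed
      have e2: "inverse \<rho> * \<rho> = 1" using \<rho>p by simp
      have "d\<psi> \<rho> * \<rho> = bump (ln \<rho> / \<kappa>) * (-\<beta>) * (\<rho> powr (-\<beta> - 1) * \<rho>) + \<rho> powr (-\<beta>) * (bump' (ln \<rho> / \<kappa>) / \<kappa>) * (inverse \<rho> * \<rho>)"
        unfolding d\<psi>_def by (simp add: algebra_simps)
      also have "\<dots> = D x"
        by (simp only: e1 e2) (simp add: D_def \<rho>_def ga_def gb_def algebra_simps)
      finally have "d\<psi> \<rho> * \<rho> = D x" .
      thus ?thesis by (simp add: ny_def r0_def)
    qed
    finally show ?thesis .
  qed
  have powsq: "(r powr a)^2 = r powr (2 * a)" for r a :: real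
    by (simp add: power2_eq_square powr_add[symmetric])
  have qm: "q x powr (- (2 * \<alpha> + 2)) = inverse (q x powr (2 * \<alpha> + 2))" for x
    by (simp only: powr_minus)
  have L2f: "(f x / q x powr (\<alpha> + 1))^2 = K x * (ga (ln (norm x)))^2" for x
  proof (cases "x = 0")
    case True thus ?thesis by (simp add: f_def \<psi>_def K_def)
  next
    case False
    have qx: "q x > 0" using qpos[OF False] .
    have "(f x / q x powr (\<alpha> + 1))^2 = (norm x powr (-\<beta>))^2 * (ga (ln (norm x)))^2 / (q x powr (\<alpha> + 1))^2"
      by (simp add: f_def \<psi>_def ga_def power_divide power_mult_distrib)
    also have "\<dots> = norm x powr (-2 * \<beta>) * (ga (ln (norm x)))^2 / q x powr (2 * \<alpha> + 2)"
      by (simp add: powsq algebra_simps)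
    also have "\<dots> = K x * (ga (ln (norm x)))^2"
      unfolding K_def qm by (simp add: divide_inverse)
    finally show ?thesis .
  qed
  have L2r: "(radial_deriv q f x / q x powr \<alpha>)^2 = K x * (gb (ln (norm x)) - \<beta> * ga (ln (norm x)))^2" for x
  proof (cases "x = 0")
    case True thus ?thesis by (simp add: rad D_def K_def)
  next
    case False
    have qx: "q x > 0" using qpos[OF False] .
    have e: "(q x * q x powr \<alpha>)^2 = q x powr (2 * \<alpha> + 2)"
    proof -
      have "(q x * q x powr \<alpha>)^2 = q x powr 1 * q x powr 1 * q x powr \<alpha> * q x powr \<alpha>"
        using qx by (simp add: power2_eq_square)
      also have "\<dots> = q x powr (1 + 1 + \<alpha> + \<alpha>)" by (simp only: powr_add)
      also have "1 + 1 + \<alpha> + \<alpha> = 2 * \<alpha> + 2" by simp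
      finally show ?thesis .
    qed
    have "(radial_deriv q f x / q x powr \<alpha>)^2 = (norm x powr (-\<beta>))^2 * (gb (ln (norm x)) - \<beta> * ga (ln (norm x)))^2 / (q x * q x powr \<alpha>)^2"
      by (simp add: rad D_def power_divide power_mult_distrib)
    also have "\<dots> = norm x powr (-2 * \<beta>) * (gb (ln (norm x)) - \<beta> * ga (ln (norm x)))^2 / q x powr (2 * \<alpha> + 2)"
      by (simp only: e powsq) (simp add: algebra_simps)
    also have "\<dots> = K x * (gb (ln (norm x)) - \<beta> * ga (ln (norm x)))^2"
      unfolding K_def qm by (simp add: divide_inverse)
    finally show ?thesis .
  qed
  define A where "A = (\<integral>x. K x * (ga (ln (norm x)))^2 \<partial>lborel)"
  define E where "E = (\<integral>x. K x * (gb (ln (norm x)))^2 \<partial>lborel)"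
  define Mx where "Mx = (\<integral>x. K x * (ga (ln (norm x)) * gb (ln (norm x))) \<partial>lborel)"
  define Bi where "Bi = (\<integral>x. K x * (gb (ln (norm x)) - \<beta> * ga (ln (norm x)))^2 \<partial>lborel)"
  have hf: "C * sqrt A \<le> sqrt Bi"
  proof -
    have "C * L2norm (\<lambda>x. f x / q x powr (\<alpha> + 1)) \<le> L2norm (\<lambda>x. radial_deriv q f x / q x powr \<alpha>)"
      using hyp fC by blast
    thus ?thesis unfolding L2norm_def L2f L2r by (simp add: A_def Bi_def)
  qed
  have c_a2: "continuous_on UNIV (\<lambda>s. (ga s)^2)" using gac by (intro continuous_intros)
  have c_b2: "continuous_on UNIV (\<lambda>s. (gb s)^2)" using gbc by (intro continuous_intros)
  have c_ab: "continuous_on UNIV (\<lambda>s. ga s * gb s)" using gac gbc by (intro continuous_intros)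
  have s2: "\<bar>s\<bar> \<ge> 2 * \<kappa> \<Longrightarrow> \<bar>s\<bar> \<ge> \<kappa>" for s using kp by simp
  have iA: "integrable lborel (\<lambda>x. K x * (ga (ln (norm x)))^2)"
    by (rule RI(2)[OF c_a2]) (use gas s2 in auto)
  have iE: "integrable lborel (\<lambda>x. K x * (gb (ln (norm x)))^2)"
    by (rule RI(2)[OF c_b2]) (use gbs in auto)
  have iM: "integrable lborel (\<lambda>x. K x * (ga (ln (norm x)) * gb (ln (norm x))))"
    by (rule RI(2)[OF c_ab]) (use gbs in auto)
  have A0: "A \<ge> 0" unfolding A_def using Knn by (intro integral_nonneg_AE) auto
  have E0: "E \<ge> 0" unfolding E_def using Knn by (intro integral_nonneg_AE) auto
  have "Bi = (\<integral>x. K x * (gb (ln (norm x)))^2 - (2 * \<beta>) * (K x * (ga (ln (norm x)) * gb (ln (norm x)))) + \<beta>^2 * (K x * (ga (ln (norm x)))^2) \<partial>lborel)"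
    unfolding Bi_def by (rule arg_cong[where f="integral\<^sup>L lborel"]) (auto simp: fun_eq_iff power2_eq_square algebra_simps)
  also have "\<dots> = E - 2 * \<beta> * Mx + \<beta>^2 * A" using iA iE iM by (simp add: E_def Mx_def A_def)
  finally have BiE: "Bi = E - 2 * \<beta> * Mx + \<beta>^2 * A" .
  have CS: "Mx^2 \<le> A * E"
  proof -
    have "(\<integral>x. ga (ln (norm x)) * gb (ln (norm x)) * K x \<partial>lborel)^2
        \<le> (\<integral>x. (ga (ln (norm x)))^2 * K x \<partial>lborel) * (\<integral>x. (gb (ln (norm x)))^2 * K x \<partial>lborel)"
      by (rule cauchy_schwarz_w) (use iA iE iM Knn in \<open>simp_all add: mult.commute mult.left_commute\<close>)
    thus ?thesis by (simp add: A_def E_def Mx_def mult.commute mult.left_commute)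
  qed
  have Mabs: "\<bar>Mx\<bar> \<le> sqrt A * sqrt E"
  proof -
    have "\<bar>Mx\<bar> = sqrt (Mx^2)" by simp
    also have "\<dots> \<le> sqrt (A * E)" using CS by (rule real_sqrt_le_mono)
    finally show ?thesis by (simp add: real_sqrt_mult)
  qed
  have sqB: "sqrt Bi \<le> sqrt E + \<bar>\<beta>\<bar> * sqrt A"
  proof -
    have "Bi \<le> (sqrt E + \<bar>\<beta>\<bar> * sqrt A)^2"
    proof -
      have m1: "- (\<beta> * Mx) \<le> \<bar>\<beta>\<bar> * \<bar>Mx\<bar>" by (metis abs_ge_minus_self abs_mult)
      have m2: "\<bar>\<beta>\<bar> * \<bar>Mx\<bar> \<le> \<bar>\<beta>\<bar> * (sqrt A * sqrt E)" using Mabs by (rule mult_left_mono) simp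
      have "- 2 * \<beta> * Mx \<le> 2 * \<bar>\<beta>\<bar> * (sqrt A * sqrt E)" using m1 m2 by linarith
      moreover have "(sqrt E + \<bar>\<beta>\<bar> * sqrt A)^2 = E + 2 * \<bar>\<beta>\<bar> * (sqrt A * sqrt E) + \<beta>^2 * A"
        using A0 E0 by (simp add: power2_eq_square algebra_simps)
      ultimately show ?thesis using BiE by simp
    qed
    hence "sqrt Bi \<le> sqrt ((sqrt E + \<bar>\<beta>\<bar> * sqrt A)^2)" by (rule real_sqrt_le_mono)
    moreover have "sqrt E + \<bar>\<beta>\<bar> * sqrt A \<ge> 0" using A0 E0 by simp
    ultimately show ?thesis by simp
  qed
  define G where "G s = (ga s)^2" for s
  have Gc: "continuous_on UNIV G" unfolding G_def[abs_def] by (rule c_a2)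
  have Gs: "G s = 0" if "\<bar>s\<bar> \<ge> \<kappa>" for s using gas[OF that] by (simp add: G_def)
  have Gsh: "continuous_on UNIV (\<lambda>s. G (s + t))" "\<And>s. \<bar>s\<bar> \<ge> 2 * \<kappa> \<Longrightarrow> G (s + t) = 0"
    if "\<bar>t\<bar> \<le> \<kappa>/2" for t
  proof -
    show "continuous_on UNIV (\<lambda>s. G (s + t))"
      by (rule continuous_on_compose2[OF Gc]) (auto intro!: continuous_intros)
    fix s :: real assume "\<bar>s\<bar> \<ge> 2 * \<kappa>"
    hence "\<bar>s + t\<bar> \<ge> \<kappa>" using that by (simp add: abs_if split: if_splits)
    thus "G (s + t) = 0" by (rule Gs)
  qed
  have Ash: "(\<integral>x. K x * G (ln (norm x) + t) \<partial>lborel) = A" if "\<bar>t\<bar> \<le> \<kappa>/2" for t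
  proof -
    have "(\<integral>x. K x * G (ln (norm x) + t) \<partial>lborel) = (\<integral>x. K x * G (ln (norm x)) \<partial>lborel)"
      by (rule SI) (use Gc Gs s2 in auto)
    thus ?thesis by (simp add: A_def G_def)
  qed
  have iSh: "integrable lborel (\<lambda>x. K x * G (ln (norm x) + t))" if "\<bar>t\<bar> \<le> \<kappa>/2" for t
    using RI(2)[OF Gsh(1)[OF that]] Gsh(2)[OF that] by simp
  define Q where "Q = M^2 / (c0^2 * \<kappa>^2)"
  have Q0: "Q \<ge> 0" by (simp add: Q_def)
  have pw: "K x * (gb (ln (norm x)))^2 \<le> Q * (K x * G (ln (norm x) + \<kappa>/2) + K x * G (ln (norm x) + (-\<kappa>/2)))" for x
  proof -
    define s where "s = ln (norm x) / \<kappa>"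
    have b: "(bump' s)^2 \<le> (M^2 / c0^2) * ((bump (s + 1/2))^2 + (bump (s - 1/2))^2)"
      using bump'_sq_bound[OF M, of s] by (simp add: c0_def)
    have g1: "G (ln (norm x) + \<kappa>/2) = (bump (s + 1/2))^2"
      using kp by (simp add: G_def ga_def s_def add_divide_distrib)
    have g2: "G (ln (norm x) + (-\<kappa>/2)) = (bump (s - 1/2))^2"
      using kp by (simp add: G_def ga_def s_def diff_divide_distrib)
    have gbx: "(gb (ln (norm x)))^2 = (bump' s)^2 / \<kappa>^2"
      by (simp add: gb_def s_def power_divide)
    have "(gb (ln (norm x)))^2 \<le> Q * (G (ln (norm x) + \<kappa>/2) + G (ln (norm x) + (-\<kappa>/2)))"
    proof -
      have "(bump' s)^2 / \<kappa>^2 \<le> (M^2 / c0^2) * ((bump (s + 1/2))^2 + (bump (s - 1/2))^2) / \<kappa>^2"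
        using b by (rule divide_right_mono) simp
      moreover have "(M^2 / c0^2) * ((bump (s + 1/2))^2 + (bump (s - 1/2))^2) / \<kappa>^2
          = M^2 / (c0^2 * \<kappa>^2) * ((bump (s + 1/2))^2 + (bump (s - 1/2))^2)"
        by (simp only: times_divide_eq_left divide_divide_eq_left)
      ultimately show ?thesis unfolding gbx g1 g2 Q_def by simp
    qed
    then have "K x * (gb (ln (norm x)))^2 \<le> K x * (Q * (G (ln (norm x) + \<kappa>/2) + G (ln (norm x) + (-\<kappa>/2))))"
      by (rule mult_left_mono[OF _ Knn[of x]])
    thus ?thesis by (simp add: algebra_simps)
  qed
  have Ebound: "E \<le> 2 * Q * A"
  proof -
    have t1: "\<bar>\<kappa>/2\<bar> \<le> \<kappa>/2" "\<bar>-\<kappa>/2\<bar> \<le> \<kappa>/2" using kp by auto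
    have "E \<le> (\<integral>x. Q * (K x * G (ln (norm x) + \<kappa>/2) + K x * G (ln (norm x) + (-\<kappa>/2))) \<partial>lborel)"
      unfolding E_def using iE iSh[OF t1(1)] iSh[OF t1(2)] pw by (intro integral_mono) auto
    also have "\<dots> = Q * (A + A)"
      using iSh[OF t1(1)] iSh[OF t1(2)] Ash[OF t1(1)] Ash[OF t1(2)] by simp
    finally show ?thesis by simp
  qed
  obtain b :: 'a where b: "b \<in> Basis" using nonempty_Basis by blast
  have Apos: "A > 0"
  proof -
    have nb: "norm b = 1" using b by simp
    have "b \<noteq> 0" using nb by auto
    hence "K b > 0" using qpos[of b] nb by (simp add: K_def)
    moreover have "ga (ln (norm b)) > 0"
      using nb bump_pos[of 0] by (simp add: ga_def) (smt (verit) exp_gt_zero)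
    ultimately have "K b * (ga (ln (norm b)))^2 > 0" by simp
    thus ?thesis unfolding A_def
      by (intro pos_integral[OF RI(1)[OF c_a2] _ iA]) (use gas s2 Knn in auto)
  qed
  have sqE: "sqrt E \<le> sqrt 2 * M / (c0 * \<kappa>) * sqrt A"
  proof -
    have "sqrt E \<le> sqrt (2 * Q * A)" using Ebound by (rule real_sqrt_le_mono)
    also have "sqrt (2 * Q * A) = sqrt 2 * sqrt Q * sqrt A" by (simp add: real_sqrt_mult)
    also have "sqrt Q = M / (c0 * \<kappa>)"
      using M0 c0p kp by (simp add: Q_def real_sqrt_divide real_sqrt_mult)
    finally show ?thesis by simp
  qed
  have "C * sqrt A \<le> (\<bar>\<beta>\<bar> + sqrt 2 * M / (c0 * \<kappa>)) * sqrt A"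
    using hf sqB sqE by (simp add: algebra_simps)
  hence "C \<le> \<bar>\<beta>\<bar> + sqrt 2 * M / (c0 * \<kappa>)" using Apos by (simp add: mult_le_cancel_right)
  thus ?thesis by (simp add: \<beta>_def c0_def \<kappa>_def)
qed

lemma part2:
  fixes q :: "'a::euclidean_space \<Rightarrow> real" and \<alpha> C :: real
  assumes hq: "homogeneous_quasi_norm q"
    and hyp: "\<forall>f \<in> Cc_infty_punctured. C * L2norm (\<lambda>x. f x / q x powr (\<alpha> + 1))
                 \<le> L2norm (\<lambda>x. radial_deriv q f x / q x powr \<alpha>)"
  shows "C \<le> \<bar>real DIM('a) - 2 - 2 * \<alpha>\<bar> / 2"
proof (rule ccontr)
  obtain M where M: "\<And>s. \<bar>bump' s\<bar> \<le> M" using bump'_bound by blast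
  have M0: "M \<ge> 0" using M[of 0] by simp
  define \<beta>0 where "\<beta>0 = \<bar>(real DIM('a) - 2 - 2 * \<alpha>) / 2\<bar>"
  have b0: "\<bar>real DIM('a) - 2 - 2 * \<alpha>\<bar> / 2 = \<beta>0" by (simp add: \<beta>0_def)
  assume "\<not> C \<le> \<bar>real DIM('a) - 2 - 2 * \<alpha>\<bar> / 2"
  hence d: "C - \<beta>0 > 0" using b0 by simp
  define e where "e = exp (-4::real)"
  have ep: "e > 0" by (simp add: e_def)
  obtain k :: nat where k: "real k > max 1 (sqrt 2 * M / (e * (C - \<beta>0)))"
    using reals_Archimedean2 by blast
  have k1: "k \<ge> 1" using k by simp
  have kp: "real k > 0" using k by simp
  have "sqrt 2 * M / (e * (C - \<beta>0)) < real k" using k by simp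
  hence "sqrt 2 * M < real k * (e * (C - \<beta>0))" using ep d by (simp add: divide_less_eq)
  moreover have ekp: "e * real k > 0" using ep kp by simp
  ultimately have lt: "sqrt 2 * M / (e * real k) < C - \<beta>0"
    by (simp only: pos_divide_less_eq[OF ekp]) (simp add: algebra_simps)
  have "C \<le> \<beta>0 + sqrt 2 * M / (exp (-4) * real k)"
    using part2_k[OF hq hyp M k1] by (simp add: \<beta>0_def)
  thus False using lt by (simp add: e_def)
qed

theorem mainTheorem9:
  fixes q :: "real ^ 'n \<Rightarrow> real" and \<alpha> :: real
  assumes "CARD('n) \<ge> 3"
    and "homogeneous_quasi_norm q"
  shows "(\<forall>f \<in> Cc_infty_punctured.
            \<bar>real CARD('n) - 2 - 2 * \<alpha>\<bar> / 2 * L2norm (\<lambda>x. f x / q x powr (\<alpha> + 1))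
              \<le> L2norm (\<lambda>x. radial_deriv q f x / q x powr \<alpha>))
     \<and> (\<alpha> \<noteq> (real CARD('n) - 2) / 2 \<longrightarrow>
         (\<forall>C. (\<forall>f \<in> Cc_infty_punctured.
                  C * L2norm (\<lambda>x. f x / q x powr (\<alpha> + 1))
                    \<le> L2norm (\<lambda>x. radial_deriv q f x / q x powr \<alpha>))
              \<longrightarrow> C \<le> \<bar>real CARD('n) - 2 - 2 * \<alpha>\<bar> / 2))"
  using part1[OF assms(2)] part2[OF assms(2)] by simp

end
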